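(* Let $1\le m\le n$ and $\mu=2^m1^{n-m}$. Then $\ker(\eta)\cong S^\mu$ as $S_{n+m}$-modules, and $\operatorname{im}(\eta)=\ker(\alpha)$, where $\alpha:\tilde M^\mu\to S^\mu$ is the map $[t]\mapsto\varepsilon_t$.
   Context: All vector spaces are over $\mathbb C$. For a partition $\lambda$ of $N$, a tableau of shape $\lambda$ is a filling of the Young diagram of $\lambda$ using each element of $[N]$ exactly once; $C_t$ is its column stabilizer. The row tabloid $\{t\}$ is the usual class of $t$ up to permuting entries within rows, and the polytabloid is $\varepsilon_t=\sum_{\beta\in C_t}\operatorname{sgn}(\beta)\{\beta t\}$; the Specht module $S^\lambda$ is the span of all $\varepsilon_t$. The column tabloid $[t]$ is the class of $t$ in the space $\tilde M^\lambda$, defined as the $\mathbb C$-span of symbols $[t]$ modulo the relations $[t]=\operatorname{sgn}(\beta)[\beta t]$ for $\beta\in C_t$; $S_N$ acts by $\sigma[t]=[\sigma t]$. The map $\alpha:\tilde M^\lambda\to S^\lambda$, $[t]\mapsto\varepsilon_t$, is a well-defined surjective $S_N$-homomorphism. For a column $c$ and $1\le \ell\le$ (length of column $c+1$), let $\pi^{\ell}_{c,1}([t])$ be the sum, over all entries $x$ of column $c$ of $t$, of the column tabloids $[t']$ where $t'$ is obtained from $t$ by swapping $x$ with the $\ell$-th entry (from the top) of column $c+1$. For $\mu=2^m1^{n-m}$ (columns of lengths $n$ and $m$), $\eta:\tilde M^\mu\to\tilde M^\mu$ is the linear map $\eta([t])=m[t]-\sum_{j=1}^m\pi^j_{1,1}([t])$.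 *)

theory Defs
  imports Complex_Main "HOL-Combinatorics.Combinatorics"
begin

text \<open>A shape is given by its list of column lengths (left to right).
 A tableau is a list of columns (each a list of entries read top to bottom);
 it is a tableau of shape cols if the column lengths are cols and the entries
 are exactly 1..N (N = sum of the column lengths), each used once.\<close>

definition tabs :: "nat list \<Rightarrow> nat list list set" where
  "tabs cols = {T. map length T = cols \<and> distinct (concat T) \<and> set (concat T) = {1..sum_list cols}}"

definition tab_act :: "(nat \<Rightarrow> nat) \<Rightarrow> nat list list \<Rightarrow> nat list list" where
  "tab_act s T = map (map s) T"

definition colstab :: "nat list list \<Rightarrow> (nat \<Rightarrow> nat) set" where
  "colstab T = {b. b permutes {1..sum_list (map length T)} \<and>
                   (\<forall>c<length T. b ` set (T!c) = set (T!c))}"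

text \<open>Row index (0-based) of entry x in T; the row tabloid of T is rowof T
 (a function from entries to rows; two tableaux have the same row tabloid iff
 these functions agree).\<close>
definition rowof :: "nat list list \<Rightarrow> nat \<Rightarrow> nat" where
  "rowof T x = (if x \<in> set (concat T)
     then (THE i. \<exists>c<length T. i < length (T!c) \<and> T!c!i = x) else 0)"

definition cspan :: "('a \<Rightarrow> complex) set \<Rightarrow> ('a \<Rightarrow> complex) set" where
  "cspan A = {v. \<exists>F c. finite F \<and> F \<subseteq> A \<and> v = (\<lambda>s. \<Sum>a\<in>F. c a * a s)}"

text \<open>Row tabloid module M^lambda: functions from row tabloids to complex numbers,
 basis vector of a tabloid r is the indicator of r. Polytabloid epsilon_t.\<close>
definition polytab :: "nat list list \<Rightarrow> (nat \<Rightarrow> nat) \<Rightarrow> complex" where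
  "polytab T = (\<lambda>r. \<Sum>b\<in>colstab T. of_int (sign b) * (if r = rowof (tab_act b T) then 1 else 0))"

definition Specht :: "nat list \<Rightarrow> ((nat \<Rightarrow> nat) \<Rightarrow> complex) set" where
  "Specht cols = cspan {polytab T | T. T \<in> tabs cols}"

definition actM :: "(nat \<Rightarrow> nat) \<Rightarrow> ((nat \<Rightarrow> nat) \<Rightarrow> complex) \<Rightarrow> ((nat \<Rightarrow> nat) \<Rightarrow> complex)" where
  "actM s g = (\<lambda>r. g (r \<circ> s))"

text \<open>Column tabloid module: free vector space Fsp on tableaux (functions on
 tableaux) modulo the relation subspace Rel; [t] is the class of delta t.\<close>
definition delta :: "nat list list \<Rightarrow> nat list list \<Rightarrow> complex" where
  "delta T = (\<lambda>S. if S = T then 1 else 0)"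

definition Fsp :: "nat list \<Rightarrow> (nat list list \<Rightarrow> complex) set" where
  "Fsp cols = {f. \<forall>T. T \<notin> tabs cols \<longrightarrow> f T = 0}"

definition Rel :: "nat list \<Rightarrow> (nat list list \<Rightarrow> complex) set" where
  "Rel cols = cspan {(\<lambda>S. delta T S - of_int (sign b) * delta (tab_act b T) S) | T b.
                      T \<in> tabs cols \<and> b \<in> colstab T}"

definition actF :: "(nat \<Rightarrow> nat) \<Rightarrow> (nat list list \<Rightarrow> complex) \<Rightarrow> (nat list list \<Rightarrow> complex)" where
  "actF s f = (\<lambda>S. f (tab_act (inv s) S))"

text \<open>pi^l_{c,1}([t]) with c, l 1-based as in the paper.\<close>
definition piop :: "nat \<Rightarrow> nat \<Rightarrow> nat list list \<Rightarrow> nat list list \<Rightarrow> complex" where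
  "piop c l T = (\<lambda>S. \<Sum>x\<in>set (T!(c-1)). delta (tab_act (transpose x (T!c!(l-1))) T) S)"

text \<open>eta on the free space (linear extension of the formula on basis elements),
 shape mu = 2^m 1^(n-m), i.e. columns [n, m].\<close>
definition eta :: "nat \<Rightarrow> nat \<Rightarrow> (nat list list \<Rightarrow> complex) \<Rightarrow> (nat list list \<Rightarrow> complex)" where
  "eta n m f = (\<lambda>S. \<Sum>T\<in>tabs [n, m]. f T * (of_nat m * delta T S - (\<Sum>j\<in>{1..m}. piop 1 j T S)))"

definition alpha :: "nat list \<Rightarrow> (nat list list \<Rightarrow> complex) \<Rightarrow> ((nat \<Rightarrow> nat) \<Rightarrow> complex)" where
  "alpha cols f = (\<lambda>r. \<Sum>T\<in>tabs cols. f T * polytab T r)"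

end

theory Submission
  imports Defs "HOL-Library.Function_Algebras"
begin


definition scf :: "complex \<Rightarrow> ('a \<Rightarrow> complex) \<Rightarrow> ('a \<Rightarrow> complex)" where
  "scf c f = (\<lambda>x. c * f x)"

interpretation VS: vector_space "scf :: complex \<Rightarrow> ('a \<Rightarrow> complex) \<Rightarrow> _"
  by unfold_locales (auto simp: scf_def plus_fun_def algebra_simps)

lemma decomp_abstract:
  fixes H :: "('a \<Rightarrow> complex) \<Rightarrow> ('a \<Rightarrow> complex)" and Bs :: "'a set"
  assumes fin: "finite Bs"
    and add: "\<And>x y. H (x + y) = H x + H y"
    and scl: "\<And>c x. H (scf c x) = scf c (H x)"
    and supp: "\<And>v x. x \<notin> Bs \<Longrightarrow> H v x = 0"
    and ki: "\<And>v. H (H v) = 0 \<Longrightarrow> H v = 0"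
  shows "\<exists>g. H v = H (H g)"
proof -
  interpret LH: Vector_Spaces.linear scf scf H
    by unfold_locales (auto simp: add scl)
  define E where "E = (\<lambda>b. (\<lambda>x. if x = b then 1 else 0 :: complex)) ` Bs"
  have finE: "finite E" using fin by (simp add: E_def)
  have WE: "range H \<subseteq> VS.span E"
  proof
    fix w assume "w \<in> range H"
    then have w0: "\<And>x. x \<notin> Bs \<Longrightarrow> w x = 0" using supp by auto
    have "w = (\<Sum>b\<in>Bs. scf (w b) (\<lambda>x. if x = b then 1 else 0))"
    proof
      fix x
      have "(\<Sum>b\<in>Bs. scf (w b) (\<lambda>x. if x = b then 1 else 0 :: complex)) x
            = (\<Sum>b\<in>Bs. w b * (if x = b then 1 else 0))"
        by (induction Bs rule: infinite_finite_induct) (auto simp: scf_def plus_fun_def)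
      also have "\<dots> = w x" using fin w0 by (cases "x \<in> Bs") (auto simp: if_distrib cong: if_cong)
      finally show "w x = (\<Sum>b\<in>Bs. scf (w b) (\<lambda>x. if x = b then 1 else 0)) x" by simp
    qed
    also have "\<dots> \<in> VS.span E"
      by (intro VS.span_sum VS.span_scale VS.span_base) (auto simp: E_def)
    finally show "w \<in> VS.span E" .
  qed
  have subW: "VS.subspace (range H)"
    using LH.subspace_image[OF VS.subspace_UNIV] by simp
  obtain B where B: "B \<subseteq> range H" "VS.independent B" "range H \<subseteq> VS.span B"
    using VS.basis_exists by blast
  have finB: "finite B"
    using VS.independent_span_bound[OF finE B(2)] B(1) WE by blast
  have injW: "inj_on H (range H)"
    using LH.inj_on_iff_eq_0[OF subW] ki by auto
  have spB: "VS.span B = range H"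
    using B subW by (metis VS.span_subspace)
  have indHB: "VS.independent (H ` B)"
    using LH.independent_injective_image[OF B(2)] injW spB by simp
  have HBW: "H ` B \<subseteq> range H" by auto
  have cardHB: "card (H ` B) = card B"
    using injW B(1) by (metis card_image inj_on_subset)
  have "range H \<subseteq> VS.span (H ` B)"
  proof (rule ccontr)
    assume "\<not> range H \<subseteq> VS.span (H ` B)"
    then obtain x where x: "x \<in> range H" "x \<notin> VS.span (H ` B)" by blast
    then have xn: "x \<notin> H ` B" using VS.span_base by blast
    have ind: "VS.independent (insert x (H ` B))"
      using VS.independent_insertI[OF x(2) indHB] .
    have "insert x (H ` B) \<subseteq> VS.span B" using x HBW spB by auto
    then have "card (insert x (H ` B)) \<le> card B"
      using VS.independent_span_bound[OF finB ind] by blast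
    moreover have "card (insert x (H ` B)) = Suc (card B)"
      using xn finB cardHB by simp
    ultimately show False by simp
  qed
  also have "VS.span (H ` B) = H ` VS.span B" by (rule LH.span_image)
  finally have "range H \<subseteq> H ` range H" using spB by simp
  then show ?thesis by auto
qed

definition pel :: "(nat \<times> nat) list \<Rightarrow> nat list" where
  "pel ps = concat (map (\<lambda>(p,q). [p,q]) ps)"
definition chs :: "(nat \<times> nat) list \<Rightarrow> nat set \<Rightarrow> nat set" where
  "chs ps S = (\<lambda>i. if i \<in> S then snd (ps!i) else fst (ps!i)) ` {..<length ps}"
definition altS :: "(nat set \<Rightarrow> complex) \<Rightarrow> (nat \<times> nat) list \<Rightarrow> complex" where
  "altS v ps = (\<Sum>S\<in>Pow {..<length ps}. (-1)^card S * v (chs ps S))"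

lemma Pow_lessThan_Suc:
  "Pow {..<Suc k} = (\<lambda>S. Suc ` S) ` Pow {..<k} \<union> (\<lambda>S. insert 0 (Suc ` S)) ` Pow {..<k}"
proof (intro equalityI subsetI)
  fix S assume S: "S \<in> Pow {..<Suc k}"
  define S' where "S' = {i. Suc i \<in> S}"
  have S'k: "S' \<in> Pow {..<k}" using S by (auto simp: S'_def)
  have eq: "S - {0} = Suc ` S'"
  proof (intro equalityI subsetI)
    fix x assume "x \<in> S - {0}" then show "x \<in> Suc ` S'"
    proof -
      assume x: "x \<in> S - {0}"
      then have "x = Suc (x - 1)" by simp
      moreover have "x - 1 \<in> S'" using x by (simp add: S'_def)
      ultimately show ?thesis by blast
    qed
  qed (auto simp: S'_def)
  show "S \<in> (\<lambda>S. Suc ` S) ` Pow {..<k} \<union> (\<lambda>S. insert 0 (Suc ` S)) ` Pow {..<k}"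
  proof (cases "0 \<in> S")
    case True
    then have "S = insert 0 (Suc ` S')" using eq by blast
    then show ?thesis using S'k by blast
  next
    case False
    then have "S = Suc ` S'" using eq by blast
    then show ?thesis using S'k by blast
  qed
qed auto

lemma chs_Suc: "chs ((p,q)#ps) (Suc ` S) = insert p (chs ps S)"
proof -
  have "{..<length ((p,q)#ps)} = insert 0 (Suc ` {..<length ps})"
    by (simp add: lessThan_Suc_eq_insert_0)
  then show ?thesis unfolding chs_def
    by (simp only: image_insert image_image) (auto simp: inj_image_mem_iff intro!: image_cong)
qed

lemma chs_0Suc: "chs ((p,q)#ps) (insert 0 (Suc ` S)) = insert q (chs ps S)"
proof -
  have "{..<length ((p,q)#ps)} = insert 0 (Suc ` {..<length ps})"
    by (simp add: lessThan_Suc_eq_insert_0)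
  then show ?thesis unfolding chs_def
    by (simp only: image_insert image_image) (auto simp: inj_image_mem_iff intro!: image_cong)
qed

lemma altS_Cons:
  "altS v ((p,q)#ps) = altS (\<lambda>C. v (insert p C) - v (insert q C)) ps"
proof -
  let ?k = "length ps"
  have disj: "(\<lambda>S. Suc ` S) ` Pow {..<?k} \<inter> (\<lambda>S. insert 0 (Suc ` S)) ` Pow {..<?k} = {}"
    by auto
  have inj1: "inj_on (\<lambda>S. Suc ` S) (Pow {..<?k})"
    by (rule inj_onI) (simp add: inj_image_eq_iff)
  have inj2: "inj_on (\<lambda>S. insert 0 (Suc ` S)) (Pow {..<?k})"
  proof (rule inj_onI)
    fix A B assume "insert 0 (Suc ` A) = insert 0 (Suc ` B)"
    then have "Suc ` A = Suc ` B" by (metis Diff_insert_absorb image_iff nat.distinct(1))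
    then show "A = B" by (simp add: inj_image_eq_iff)
  qed
  have c1: "card (Suc ` S) = card S" for S :: "nat set" by (simp add: card_image)
  have c2: "finite S \<Longrightarrow> card (insert 0 (Suc ` S)) = Suc (card S)" for S :: "nat set"
    by (simp add: card_image)
  have "altS v ((p,q)#ps) = (\<Sum>S\<in>(\<lambda>S. Suc ` S) ` Pow {..<?k}. (-1)^card S * v (chs ((p,q)#ps) S))
      + (\<Sum>S\<in>(\<lambda>S. insert 0 (Suc ` S)) ` Pow {..<?k}. (-1)^card S * v (chs ((p,q)#ps) S))"
    unfolding altS_def by (simp only: length_Cons Pow_lessThan_Suc, rule sum.union_disjoint) (use disj in auto)
  also have "\<dots> = (\<Sum>S\<in>Pow {..<?k}. (-1)^card S * v (insert p (chs ps S)))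
      + (\<Sum>S\<in>Pow {..<?k}. - ((-1)^card S * v (insert q (chs ps S))))"
    apply (subst sum.reindex[OF inj1], subst sum.reindex[OF inj2])
    apply (intro arg_cong2[where f="(+)"] sum.cong refl)
     apply (simp add: c1 chs_Suc)
    apply (simp add: chs_0Suc)
    apply (subst c2) apply (auto intro: finite_subset)
    done
  also have "\<dots> = altS (\<lambda>C. v (insert p C) - v (insert q C)) ps"
    unfolding altS_def sum.distrib[symmetric] by (simp add: algebra_simps)
  finally show ?thesis .
qed
lemma altS_Nil: "altS v [] = v {}"
  by (simp add: altS_def chs_def)

lemma all_same_ksubsets:
  assumes fin: "finite X"
    and sw: "\<And>p q C. p \<in> X \<Longrightarrow> q \<in> X \<Longrightarrow> p \<noteq> q \<Longrightarrow> C \<subseteq> X - {p,q} \<Longrightarrow> card C + 1 = k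
              \<Longrightarrow> v (insert p C) = v (insert q C)"
  shows "B \<subseteq> X \<Longrightarrow> B' \<subseteq> X \<Longrightarrow> card B = k \<Longrightarrow> card B' = k \<Longrightarrow> v B = v B'"
proof (induction "card (B - B')" arbitrary: B rule: less_induct)
  case less
  have fB: "finite B" "finite B'" using less.prems fin finite_subset by blast+
  show ?case
  proof (cases "B = B'")
    case True then show ?thesis by simp
  next
    case False
    have "\<not> B \<subseteq> B'"
      using False fB less.prems(3,4) by (metis card_subset_eq)
    then obtain y where y: "y \<in> B" "y \<notin> B'" by blast
    have "\<not> B' \<subseteq> B"
      using False fB less.prems(3,4) by (metis card_subset_eq)
    then obtain x where x: "x \<in> B'" "x \<notin> B" by blast
    define B'' where "B'' = insert x (B - {y})"
    have "v B = v B''"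
    proof -
      have cB: "card B > 0" using y fB by (auto simp: card_gt_0_iff)
      have "v (insert y (B - {y})) = v (insert x (B - {y}))"
        apply (rule sw)
        using x y less.prems fB cB by (auto simp: card_Diff_singleton)
      then show ?thesis using y by (simp add: B''_def insert_absorb)
    qed
    moreover have "v B'' = v B'"
    proof (rule less.hyps)
      have "B'' - B' = (B - B') - {y}" using x y by (auto simp: B''_def)
      then show "card (B'' - B') < card (B - B')"
        using y fB by (metis DiffI card_Diff1_less finite_Diff)
      show "B'' \<subseteq> X" using less.prems x y by (auto simp: B''_def)
      have "card B > 0" using y fB by (auto simp: card_gt_0_iff)
      then show "card B'' = k" using less.prems x y fB by (simp add: B''_def card_Diff_singleton)
    qed (use less.prems in auto)
    ultimately show ?thesis by simp
  qed
qed

lemma harm_alt_zero: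
  "finite X \<Longrightarrow>
   (\<forall>C. C \<subseteq> X \<longrightarrow> card C + 1 = k \<longrightarrow> (\<Sum>x\<in>X - C. v (insert x C)) = 0) \<Longrightarrow>
   (\<forall>ps. length ps = k \<longrightarrow> distinct (pel ps) \<longrightarrow> set (pel ps) \<subseteq> X \<longrightarrow> altS v ps = 0) \<Longrightarrow>
   B \<subseteq> X \<Longrightarrow> card B = k \<Longrightarrow> v B = 0"
proof (induction k arbitrary: X v B)
  case 0
  then have "finite B" using finite_subset by auto
  then have "B = {}" using 0 by simp
  moreover have "pel [] = []" by (simp add: pel_def)
  then have "altS v [] = 0" using 0(3) by simp
  ultimately show ?case by (simp add: altS_Nil)
next
  case (Suc k)
  note fin = Suc.prems(1)
  have sw: "v (insert p C) = v (insert q C)"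
    if p: "p \<in> X" and q: "q \<in> X" and pq: "p \<noteq> q" and C: "C \<subseteq> X - {p,q}" and cC: "card C + 1 = Suc k"
    for p q C
  proof -
    define w where "w = (\<lambda>C. v (insert p C) - v (insert q C))"
    have "w C = 0"
    proof (rule Suc.IH[where X="X - {p,q}"])
      show "finite (X - {p, q})" using fin by simp
      show "C \<subseteq> X - {p,q}" by (rule C)
      show "card C = k" using cC by simp
      show "\<forall>C. C \<subseteq> X - {p, q} \<longrightarrow> card C + 1 = k \<longrightarrow> (\<Sum>x\<in>X - {p, q} - C. w (insert x C)) = 0"
      proof (intro allI impI)
        fix D assume D: "D \<subseteq> X - {p,q}" and cD: "card D + 1 = k"
        have fD: "finite D" using D fin finite_subset by blast
        have hp: "(\<Sum>x\<in>X - insert p D. v (insert x (insert p D))) = 0"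
        proof -
          have "p \<notin> D" using D by auto
          then have "insert p D \<subseteq> X" "card (insert p D) + 1 = Suc k" using D p cD fD by auto
          then show ?thesis using Suc.prems(2) by blast
        qed
        have hq: "(\<Sum>x\<in>X - insert q D. v (insert x (insert q D))) = 0"
        proof -
          have "q \<notin> D" using D by auto
          then have "insert q D \<subseteq> X" "card (insert q D) + 1 = Suc k" using D q cD fD by auto
          then show ?thesis using Suc.prems(2) by blast
        qed
        have e1: "X - insert p D = insert q (X - {p,q} - D)" using D p q pq by auto
        have e2: "X - insert q D = insert p (X - {p,q} - D)" using D p q pq by auto
        have hp': "v (insert q (insert p D)) + (\<Sum>x\<in>X - {p,q} - D. v (insert x (insert p D))) = 0"
          using hp fin unfolding e1 by (subst (asm) sum.insert) auto
        have hq': "v (insert p (insert q D)) + (\<Sum>x\<in>X - {p,q} - D. v (insert x (insert q D))) = 0"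
          using hq fin unfolding e2 by (subst (asm) sum.insert) auto
        have "(\<Sum>x\<in>X - {p, q} - D. w (insert x D)) =
              (\<Sum>x\<in>X - {p,q} - D. v (insert x (insert p D))) - (\<Sum>x\<in>X - {p,q} - D. v (insert x (insert q D)))"
          unfolding w_def sum_subtractf[symmetric] by (simp add: insert_commute)
        also have "\<dots> = 0"
        proof -
          have e: "v (insert q (insert p D)) = v (insert p (insert q D))" by (simp add: insert_commute)
          have "(\<Sum>x\<in>X - {p,q} - D. v (insert x (insert p D))) = (\<Sum>x\<in>X - {p,q} - D. v (insert x (insert q D)))"
            using hp' hq' e by (metis add_left_cancel)
          then show ?thesis by simp
        qed
        finally show "(\<Sum>x\<in>X - {p, q} - D. w (insert x D)) = 0" .
      qed
      show "\<forall>ps. length ps = k \<longrightarrow> distinct (pel ps) \<longrightarrow> set (pel ps) \<subseteq> X - {p, q} \<longrightarrow> altS w ps = 0"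
      proof (intro allI impI)
        fix ps assume l: "length ps = k" and d: "distinct (pel ps)" and s: "set (pel ps) \<subseteq> X - {p,q}"
        have pc: "pel ((p,q)#ps) = p # q # pel ps" by (simp add: pel_def)
        have "length ((p,q)#ps) = Suc k" "distinct (pel ((p,q)#ps))" "set (pel ((p,q)#ps)) \<subseteq> X"
          using l d s p q pq unfolding pc by auto
        then have "altS v ((p,q)#ps) = 0"
          using Suc.prems(3) by blast
        then show "altS w ps = 0" by (simp add: altS_Cons w_def)
      qed
    qed
    then show ?thesis by (simp add: w_def)
  qed
  have same: "v B1 = v B2" if "B1 \<subseteq> X" "B2 \<subseteq> X" "card B1 = Suc k" "card B2 = Suc k" for B1 B2
    by (rule all_same_ksubsets[OF fin, of "Suc k" v]) (use sw that in auto)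
  have fB: "finite B" using Suc.prems(4) fin finite_subset by blast
  obtain y where y: "y \<in> B" using Suc.prems(5) by (metis card.empty ex_in_conv nat.distinct(1))
  define C where "C = B - {y}"
  have CX: "C \<subseteq> X" using Suc.prems(4) by (auto simp: C_def)
  have cC: "card C + 1 = Suc k" using Suc.prems(5) y fB by (simp add: C_def card_Diff_singleton)
  have "(\<Sum>x\<in>X - C. v (insert x C)) = 0" using Suc.prems(2) CX cC by blast
  moreover have "(\<Sum>x\<in>X - C. v (insert x C)) = (\<Sum>x\<in>X - C. v B)"
  proof (rule sum.cong[OF refl])
    fix x assume x: "x \<in> X - C"
    have fC: "finite C" using fB by (simp add: C_def)
    show "v (insert x C) = v B"
      by (rule same) (use x Suc.prems(4,5) CX cC fC in auto)
  qed
  moreover have "card (X - C) > 0" using y Suc.prems(4) fin by (auto simp: C_def card_gt_0_iff)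
  ultimately show ?case by simp
qed


definition wp :: "nat \<Rightarrow> nat list list \<Rightarrow> nat \<Rightarrow> nat" where
  "wp N T = (\<lambda>k. if k \<in> {1..N} then concat T ! (k - 1) else k)"
definition sgnT :: "nat \<Rightarrow> nat list list \<Rightarrow> int" where
  "sgnT N T = sign (wp N T)"

lemma tabsD:
  assumes "T \<in> tabs cols"
  shows "map length T = cols" "distinct (concat T)" "set (concat T) = {1..sum_list cols}"
    "length (concat T) = sum_list cols"
  using assms by (auto simp: tabs_def length_concat)

lemma tabs_finite: "finite (tabs cols)"
proof -
  let ?N = "sum_list cols"
  let ?A = "{xs. set xs \<subseteq> {1..?N} \<and> length xs \<le> ?N}"
  have fA: "finite ?A" by (rule finite_lists_length_le) simp
  have "tabs cols \<subseteq> {T. set T \<subseteq> ?A \<and> length T \<le> length cols}"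
  proof
    fix T assume T: "T \<in> tabs cols"
    note d = tabsD[OF T]
    have "set T \<subseteq> ?A"
    proof
      fix xs assume xs: "xs \<in> set T"
      have "set xs \<subseteq> set (concat T)" using xs by auto
      moreover have "length xs \<le> length (concat T)" using xs
        by (metis elem_le_sum_list in_set_conv_nth length_concat length_map nth_map)
      ultimately show "xs \<in> ?A" using d by auto
    qed
    moreover have "length T \<le> length cols" using d(1) by (metis length_map order_refl)
    ultimately show "T \<in> {T. set T \<subseteq> ?A \<and> length T \<le> length cols}" by simp
  qed
  moreover have "finite {T. set T \<subseteq> ?A \<and> length T \<le> length cols}"
    by (rule finite_lists_length_le[OF fA])
  ultimately show ?thesis by (rule finite_subset)
qed

lemma wp_permutes:
  assumes T: "T \<in> tabs cols" and N: "N = sum_list cols"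
  shows "wp N T permutes {1..N}"
proof (rule bij_imp_permutes)
  note d = tabsD[OF T]
  have b1: "bij_betw (\<lambda>k. k - 1) {1..N} {..<N}"
    by (rule bij_betw_byWitness[where f'=Suc]) auto
  have b2: "bij_betw ((!) (concat T)) {..<N} {1..N}"
    by (rule bij_betw_nth) (use d N in auto)
  have "bij_betw ((!) (concat T) \<circ> (\<lambda>k. k - 1)) {1..N} {1..N}"
    by (rule bij_betw_trans[OF b1 b2])
  then show "bij_betw (wp N T) {1..N} {1..N}"
    by (rule bij_betw_cong[THEN iffD1, rotated]) (auto simp: wp_def)
qed (auto simp: wp_def)

lemma concat_tab_act: "concat (tab_act b T) = map b (concat T)"
  by (simp add: tab_act_def map_concat)

lemma map_length_tab_act [simp]: "map length (tab_act b T) = map length T"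
  by (simp add: tab_act_def comp_def)

lemma length_tab_act [simp]: "length (tab_act b T) = length T"
  by (simp add: tab_act_def)

lemma nth_tab_act: "c < length T \<Longrightarrow> tab_act b T ! c = map b (T ! c)"
  by (simp add: tab_act_def)

lemma tab_act_tabs:
  assumes b: "b permutes {1..sum_list cols}" and T: "T \<in> tabs cols"
  shows "tab_act b T \<in> tabs cols"
proof -
  note d = tabsD[OF T]
  have "inj_on b (set (concat T))" using b permutes_inj by (metis injD inj_onI)
  then have "distinct (map b (concat T))" using d(2) by (simp add: distinct_map)
  moreover have "set (map b (concat T)) = {1..sum_list cols}"
    using d(3) permutes_image[OF b] by simp
  ultimately have "distinct (concat (tab_act b T))" "set (concat (tab_act b T)) = {1..sum_list cols}"
    by (simp_all only: concat_tab_act)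
  moreover have "map length (tab_act b T) = cols" using d(1) by simp
  ultimately show ?thesis unfolding tabs_def by blast
qed

lemma wp_tab_act:
  assumes b: "b permutes {1..N}" and T: "T \<in> tabs cols" and N: "N = sum_list cols"
  shows "wp N (tab_act b T) = b \<circ> wp N T"
proof
  fix k
  note d = tabsD[OF T]
  show "wp N (tab_act b T) k = (b \<circ> wp N T) k"
  proof (cases "k \<in> {1..N}")
    case True
    then have "k - 1 < length (concat T)" using d N by auto
    then show ?thesis using True by (simp add: wp_def concat_tab_act)
  next
    case False
    then show ?thesis using permutes_not_in[OF b False] by (auto simp: wp_def)
  qed
qed

lemma perm_of_permutes: "b permutes {1..(N::nat)} \<Longrightarrow> permutation b"
  by (rule permutes_imp_permutation[of "{1..N}"]) auto

lemma sgnT_tab_act: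
  assumes b: "b permutes {1..N}" and T: "T \<in> tabs cols" and N: "N = sum_list cols"
  shows "sgnT N (tab_act b T) = sign b * sgnT N T"
  unfolding sgnT_def wp_tab_act[OF b T N]
  by (rule sign_compose) (use perm_of_permutes b wp_permutes[OF T N] in auto)

lemma sgnT_sq [simp]: "sgnT N T * sgnT N T = 1"
  by (simp add: sgnT_def)

lemma tab_eq_concat:
  "map length T1 = map length T2 \<Longrightarrow> concat T1 = concat T2 \<Longrightarrow> T1 = T2"
proof (induction T1 arbitrary: T2)
  case Nil then show ?case by simp
next
  case (Cons a T1)
  then obtain b T2' where T2: "T2 = b # T2'" "length a = length b" "map length T1 = map length T2'"
    by (cases T2) auto
  then have "a @ concat T1 = b @ concat T2'" using Cons.prems by simp
  then have "a = b" "concat T1 = concat T2'" using T2(2) by auto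
  then show ?case using Cons.IH T2 by simp
qed


lemma cspan_zero: "(\<lambda>s. 0) \<in> cspan A"
  unfolding cspan_def by (rule CollectI, rule exI[of _ "{}"]) auto

lemma cspan_base: "a \<in> A \<Longrightarrow> a \<in> cspan A"
  unfolding cspan_def by (rule CollectI, rule exI[of _ "{a}"], rule exI[of _ "\<lambda>_. 1"]) auto

lemma cspan_add:
  assumes "v \<in> cspan A" "w \<in> cspan A"
  shows "(\<lambda>s. v s + w s) \<in> cspan A"
proof -
  obtain F c where F: "finite F" "F \<subseteq> A" "v = (\<lambda>s. \<Sum>a\<in>F. c a * a s)"
    using assms(1) unfolding cspan_def by blast
  obtain G d where G: "finite G" "G \<subseteq> A" "w = (\<lambda>s. \<Sum>a\<in>G. d a * a s)"
    using assms(2) unfolding cspan_def by blast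
  define e where "e = (\<lambda>a. (if a \<in> F then c a else 0) + (if a \<in> G then d a else 0))"
  have "(\<lambda>s. v s + w s) = (\<lambda>s. \<Sum>a\<in>F \<union> G. e a * a s)"
  proof
    fix s
    have 1: "(\<Sum>a\<in>F \<union> G. (if a \<in> F then c a else 0) * a s) = (\<Sum>a\<in>F. c a * a s)"
      by (rule sum.mono_neutral_cong_right) (use F G in auto)
    have 2: "(\<Sum>a\<in>F \<union> G. (if a \<in> G then d a else 0) * a s) = (\<Sum>a\<in>G. d a * a s)"
      by (rule sum.mono_neutral_cong_right) (use F G in auto)
    show "v s + w s = (\<Sum>a\<in>F \<union> G. e a * a s)"
      unfolding e_def distrib_right sum.distrib 1 2 F(3) G(3) ..
  qed
  then show ?thesis unfolding cspan_def
    by (intro CollectI exI[of _ "F \<union> G"] exI[of _ e] conjI) (use F G in auto)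
qed

lemma cspan_scale:
  assumes "v \<in> cspan A"
  shows "(\<lambda>s. k * v s) \<in> cspan A"
proof -
  obtain F c where F: "finite F" "F \<subseteq> A" "v = (\<lambda>s. \<Sum>a\<in>F. c a * a s)"
    using assms(1) unfolding cspan_def by blast
  have "(\<lambda>s. k * v s) = (\<lambda>s. \<Sum>a\<in>F. (k * c a) * a s)"
    using F(3) by (simp add: sum_distrib_left mult.assoc)
  then show ?thesis unfolding cspan_def
    by (intro CollectI exI[of _ F] exI[of _ "\<lambda>a. k * c a"] conjI) (use F in auto)
qed

lemma cspan_sum:
  assumes "finite I" "\<And>i. i \<in> I \<Longrightarrow> g i \<in> cspan A"
  shows "(\<lambda>s. \<Sum>i\<in>I. g i s) \<in> cspan A"
  using assms
proof (induction I rule: finite_induct)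
  case empty then show ?case by (simp add: cspan_zero)
next
  case (insert x F)
  then show ?case using cspan_add[of "g x" A "\<lambda>s. \<Sum>i\<in>F. g i s"] by simp
qed

lemma cspan_elim:
  assumes "v \<in> cspan A"
  obtains F c where "finite F" "F \<subseteq> A" "v = (\<lambda>s. \<Sum>a\<in>F. c a * a s)"
  using assms unfolding cspan_def by blast

lemma tab2:
  assumes "T \<in> tabs [n,m]"
  shows "T = [T!0, T!1]" "length (T!0) = n" "length (T!1) = m" "distinct (T!0)" "distinct (T!1)"
    "set (T!0) \<inter> set (T!1) = {}" "set (T!0) \<union> set (T!1) = {1..n+m}"
    "set (T!0) = {1..n+m} - set (T!1)" "set (T!1) \<subseteq> {1..n+m}" "card (set (T!1)) = m"
    "length T = 2"
proof -
  have ml: "map length T = [n,m]" and d: "distinct (concat T)" and s: "set (concat T) = {1..sum_list [n,m]}"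
    using tabsD[OF assms] by auto
  obtain a b where T: "T = [a,b]" using ml by (cases T; cases "tl T") auto
  show "T = [T!0, T!1]" using T by simp
  show "length (T!0) = n" "length (T!1) = m" "length T = 2" using ml T by auto
  show "distinct (T!0)" "distinct (T!1)" "set (T!0) \<inter> set (T!1) = {}" using d T by auto
  show "set (T!0) \<union> set (T!1) = {1..n+m}" using s T by auto
  then show "set (T!0) = {1..n+m} - set (T!1)" "set (T!1) \<subseteq> {1..n+m}"
    using d T by auto
  show "card (set (T!1)) = m" using d T ml by (simp add: distinct_card)
qed

lemma tabs2I:
  assumes "length a = n" "length b = m" "distinct (a @ b)" "set a \<union> set b = {1..n+m}"
  shows "[a,b] \<in> tabs [n,m]"
  using assms unfolding tabs_def by auto

lemma same_cols:
  assumes T: "T \<in> tabs [n,m]" and T': "T' \<in> tabs [n,m]" and e: "set (T!1) = set (T'!1)"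
  shows "\<exists>b\<in>colstab T. tab_act b T = T'"
proof -
  let ?N = "n+m"
  have pT: "wp ?N T permutes {1..?N}" and pT': "wp ?N T' permutes {1..?N}"
    using wp_permutes[OF T] wp_permutes[OF T'] by auto
  define b where "b = wp ?N T' \<circ> inv (wp ?N T)"
  have pb: "b permutes {1..?N}" unfolding b_def
    by (rule permutes_compose[OF permutes_inv[OF pT] pT'])
  note dT = tabsD[OF T] and dT' = tabsD[OF T']
  have eq: "tab_act b T = T'"
  proof (rule tab_eq_concat)
    show "map length (tab_act b T) = map length T'" using dT(1) dT'(1) by simp
    show "concat (tab_act b T) = concat T'"
      unfolding concat_tab_act
    proof (rule nth_equalityI)
      show "length (map b (concat T)) = length (concat T')" using dT(4) dT'(4) by simp
      fix i assume i: "i < length (map b (concat T))"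
      then have i': "i < ?N" using dT(4) by simp
      have w1: "wp ?N T (Suc i) = concat T ! i" using i' by (simp add: wp_def)
      have w2: "wp ?N T' (Suc i) = concat T' ! i" using i' by (simp add: wp_def)
      have "inv (wp ?N T) (wp ?N T (Suc i)) = Suc i"
        using permutes_inverses(2)[OF pT] by simp
      then show "map b (concat T) ! i = concat T' ! i"
        using i w1 w2 by (simp add: b_def)
    qed
  qed
  have "b \<in> colstab T"
    unfolding colstab_def
  proof (intro CollectI conjI allI impI)
    show "b permutes {1..sum_list (map length T)}" using pb dT(1) by simp
    fix c assume c: "c < length T"
    then have "c = 0 \<or> c = 1" using tab2(11)[OF T] by auto
    moreover have "b ` set (T!c) = set (T'!c)"
      using c eq[symmetric] by (simp add: nth_tab_act)
    ultimately show "b ` set (T!c) = set (T!c)"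
      using e tab2(8)[OF T] tab2(8)[OF T'] by auto
  qed
  then show ?thesis using eq by blast
qed

lemma colstab_permutes: "b \<in> colstab T \<Longrightarrow> T \<in> tabs [n,m] \<Longrightarrow> b permutes {1..n+m}"
  unfolding colstab_def using tabsD(1)[of T "[n,m]"] by simp

lemma colstab_col1: "b \<in> colstab T \<Longrightarrow> T \<in> tabs [n,m] \<Longrightarrow> set (tab_act b T ! 1) = set (T!1)"
  unfolding colstab_def using tab2(11) by (auto simp: nth_tab_act)

lemma tab_act_inj:
  assumes T: "T \<in> tabs [n,m]" and b: "b permutes {1..n+m}" and b': "b' permutes {1..n+m}"
    and e: "tab_act b T = tab_act b' T"
  shows "b = b'"
proof
  fix x
  show "b x = b' x"
  proof (cases "x \<in> {1..n+m}")
    case True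
    then have "x \<in> set (concat T)" using tabsD(3)[OF T] by simp
    moreover have "map b (concat T) = map b' (concat T)" using e by (metis concat_tab_act)
    ultimately show ?thesis by (metis map_eq_conv)
  next
    case False
    then show ?thesis using permutes_not_in[OF b] permutes_not_in[OF b'] by simp
  qed
qed


definition redf :: "nat \<Rightarrow> nat \<Rightarrow> (nat list list \<Rightarrow> complex) \<Rightarrow> nat set \<Rightarrow> complex" where
  "redf n m f B = (\<Sum>T\<in>{T\<in>tabs [n,m]. set (T!1) = B}. f T * of_int (sgnT (n+m) T))"

lemma redf_lin:
  assumes "finite I"
  shows "redf n m (\<lambda>S. \<Sum>i\<in>I. c i * g i S) B = (\<Sum>i\<in>I. c i * redf n m (g i) B)"
  unfolding redf_def sum_distrib_left sum_distrib_right
  by (subst sum.swap) (simp add: mult.assoc)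

lemma redf_diff:
  "redf n m (\<lambda>S. f S - k * g S) B = redf n m f B - k * redf n m g B"
  unfolding redf_def sum_distrib_left left_diff_distrib sum_subtractf
  by (simp add: mult.assoc)

lemma redf_delta:
  "redf n m (delta U) B = (if U \<in> tabs [n,m] \<and> set (U!1) = B then of_int (sgnT (n+m) U) else 0)"
proof -
  have "redf n m (delta U) B = (\<Sum>T\<in>{T\<in>tabs [n,m]. set (T!1) = B}. if T = U then of_int (sgnT (n+m) T) else 0)"
    unfolding redf_def delta_def by (rule sum.cong) auto
  also have "\<dots> = (if U \<in> tabs [n,m] \<and> set (U!1) = B then of_int (sgnT (n+m) U) else 0)"
    by (subst sum.delta) (auto simp: tabs_finite)
  finally show ?thesis .
qed

lemma redf_gen:
  assumes T: "T \<in> tabs [n,m]" and b: "b \<in> colstab T"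
  shows "redf n m (\<lambda>S. delta T S - of_int (sign b) * delta (tab_act b T) S) B = 0"
proof -
  have pb: "b permutes {1..n+m}" using colstab_permutes[OF b T] .
  have bT: "tab_act b T \<in> tabs [n,m]" using tab_act_tabs[of b "[n,m]" T] pb T by simp
  have c1: "set (tab_act b T ! 1) = set (T!1)" using colstab_col1[OF b T] .
  have sg: "sgnT (n+m) (tab_act b T) = sign b * sgnT (n+m) T"
    by (rule sgnT_tab_act[OF pb T]) simp
  have "of_int (sign b) * of_int (sign b * sgnT (n+m) T) = (of_int (sgnT (n+m) T) :: complex)"
    by (simp add: mult.assoc[symmetric] flip: of_int_mult)
  then show ?thesis
    unfolding redf_diff redf_delta using T bT c1 sg by auto
qed

lemma Rel_red0:
  assumes v: "v \<in> Rel [n,m]"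
  shows "redf n m v B = 0"
proof -
  let ?G = "{(\<lambda>S. delta T S - of_int (sign b) * delta (tab_act b T) S) | T b.
                      T \<in> tabs [n,m] \<and> b \<in> colstab T}"
  obtain F c where F: "finite F" "F \<subseteq> ?G" "v = (\<lambda>s. \<Sum>a\<in>F. c a * a s)"
    using v unfolding Rel_def by (rule cspan_elim)
  have "redf n m v B = (\<Sum>a\<in>F. c a * redf n m a B)"
    unfolding F(3) by (rule redf_lin[OF F(1)])
  also have "\<dots> = 0"
  proof (rule sum.neutral, rule ballI)
    fix a assume "a \<in> F"
    then have "a \<in> ?G" using F(2) by blast
    then obtain T b where "T \<in> tabs [n,m]" "b \<in> colstab T"
      "a = (\<lambda>S. delta T S - of_int (sign b) * delta (tab_act b T) S)" by blast
    then show "c a * redf n m a B = 0" using redf_gen by simp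
  qed
  finally show ?thesis .
qed

lemma Fsp_expand:
  assumes "f \<in> Fsp [n,m]"
  shows "f = (\<lambda>S. \<Sum>T\<in>tabs [n,m]. f T * delta T S)"
proof
  fix S
  show "f S = (\<Sum>T\<in>tabs [n,m]. f T * delta T S)"
    using assms tabs_finite unfolding Fsp_def delta_def
    by (cases "S \<in> tabs [n,m]") (auto simp: if_distrib cong: if_cong)
qed

definition rep :: "nat \<Rightarrow> nat \<Rightarrow> nat set \<Rightarrow> nat list list" where
  "rep n m B = (SOME T. T \<in> tabs [n,m] \<and> set (T!1) = B)"

lemma rep_props:
  assumes "T \<in> tabs [n,m]"
  shows "rep n m (set (T!1)) \<in> tabs [n,m]" "set (rep n m (set (T!1)) ! 1) = set (T!1)"
  using someI[of "\<lambda>T'. T' \<in> tabs [n,m] \<and> set (T'!1) = set (T!1)" T] assms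
  unfolding rep_def by auto

lemma red0_Rel:
  assumes f: "f \<in> Fsp [n,m]" and r: "\<And>B. redf n m f B = 0"
  shows "f \<in> Rel [n,m]"
proof -
  let ?N = "n+m"
  define R where "R = (\<lambda>T. rep n m (set (T!1)))"
  define bb where "bb = (\<lambda>T. SOME b. b \<in> colstab T \<and> tab_act b T = R T)"
  have bb: "bb T \<in> colstab T" "tab_act (bb T) T = R T" if T: "T \<in> tabs [n,m]" for T
  proof -
    have "\<exists>b\<in>colstab T. tab_act b T = R T"
      using same_cols[OF T rep_props(1)[OF T]] rep_props(2)[OF T] unfolding R_def by auto
    then show "bb T \<in> colstab T" "tab_act (bb T) T = R T"
      unfolding bb_def by (metis (mono_tags, lifting) someI)+
  qed
  have sgb: "of_int (sign (bb T)) = (of_int (sgnT ?N (R T) * sgnT ?N T) :: complex)"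
    if T: "T \<in> tabs [n,m]" for T
  proof -
    have pb: "bb T permutes {1..?N}" using colstab_permutes[OF bb(1)[OF T] T] .
    have "sgnT ?N (R T) = sign (bb T) * sgnT ?N T"
      using sgnT_tab_act[OF pb T] bb(2)[OF T] by simp
    then have "sgnT ?N (R T) * sgnT ?N T = sign (bb T)"
      by (simp add: mult.assoc)
    then show ?thesis by simp
  qed
  define gen where "gen = (\<lambda>T S. delta T S - of_int (sign (bb T)) * delta (tab_act (bb T) T) S)"
  have genR: "gen T \<in> Rel [n,m]" if "T \<in> tabs [n,m]" for T
    unfolding Rel_def gen_def using that bb(1)[OF that] by (intro cspan_base) blast
  have Z: "(\<Sum>T\<in>tabs [n,m]. f T * (of_int (sign (bb T)) * delta (R T) S)) = 0" for S
  proof -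
    let ?g = "\<lambda>T. set (T!1)"
    have "(\<Sum>T\<in>tabs [n,m]. f T * (of_int (sign (bb T)) * delta (R T) S))
        = (\<Sum>T\<in>tabs [n,m]. (f T * of_int (sgnT ?N T)) * (of_int (sgnT ?N (rep n m (?g T))) * delta (rep n m (?g T)) S))"
      by (rule sum.cong[OF refl]) (simp add: sgb R_def)
    also have "\<dots> = (\<Sum>B\<in>?g ` tabs [n,m]. \<Sum>T\<in>{T\<in>tabs [n,m]. ?g T = B}.
                 (f T * of_int (sgnT ?N T)) * (of_int (sgnT ?N (rep n m (?g T))) * delta (rep n m (?g T)) S))"
      by (rule sum.group[symmetric]) (auto simp: tabs_finite)
    also have "\<dots> = (\<Sum>B\<in>?g ` tabs [n,m]. redf n m f B * (of_int (sgnT ?N (rep n m B)) * delta (rep n m B) S))"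
      unfolding redf_def sum_distrib_right by (intro sum.cong refl) auto
    also have "\<dots> = 0" using r by simp
    finally show ?thesis .
  qed
  have E: "f S = (\<Sum>T\<in>tabs [n,m]. f T * gen T S)" for S
  proof -
    have "f S = (\<Sum>T\<in>tabs [n,m]. f T * delta T S)" by (subst Fsp_expand[OF f]) simp
    also have "\<dots> = (\<Sum>T\<in>tabs [n,m]. f T * gen T S) +
         (\<Sum>T\<in>tabs [n,m]. f T * (of_int (sign (bb T)) * delta (R T) S))"
      unfolding sum.distrib[symmetric]
      by (rule sum.cong[OF refl]) (simp add: gen_def bb(2) algebra_simps)
    finally show ?thesis using Z by simp
  qed
  have RR: "(\<lambda>S. \<Sum>T\<in>tabs [n,m]. f T * gen T S) \<in> Rel [n,m]"
    unfolding Rel_def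
    by (rule cspan_sum[OF tabs_finite], rule cspan_scale) (use genR[unfolded Rel_def] in auto)
  have f_eq: "f = (\<lambda>S. \<Sum>T\<in>tabs [n,m]. f T * gen T S)" by (rule ext, rule E)
  show ?thesis by (subst f_eq) (rule RR)
qed


definition Bm :: "nat \<Rightarrow> nat \<Rightarrow> nat set set" where
  "Bm n m = {B. B \<subseteq> {1..n+m} \<and> card B = m}"
definition Cm :: "nat \<Rightarrow> nat \<Rightarrow> nat set set" where
  "Cm n m = {C. C \<subseteq> {1..n+m} \<and> card C + 1 = m}"
definition Dop :: "nat \<Rightarrow> nat \<Rightarrow> (nat set \<Rightarrow> complex) \<Rightarrow> nat set \<Rightarrow> complex" where
  "Dop n m v C = (\<Sum>B\<in>{B\<in>Bm n m. C \<subseteq> B}. v B)"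
definition Dt :: "nat \<Rightarrow> nat \<Rightarrow> (nat set \<Rightarrow> complex) \<Rightarrow> nat set \<Rightarrow> complex" where
  "Dt n m u B = (if B \<in> Bm n m then (\<Sum>C\<in>{C\<in>Cm n m. C \<subseteq> B}. u C) else 0)"

lemma finite_Bm: "finite (Bm n m)"
  by (rule finite_subset[of _ "Pow {1..n+m}"]) (auto simp: Bm_def)
lemma finite_Cm: "finite (Cm n m)"
  by (rule finite_subset[of _ "Pow {1..n+m}"]) (auto simp: Cm_def)

lemma tab_Bm: "T \<in> tabs [n,m] \<Longrightarrow> set (T!1) \<in> Bm n m"
  using tab2(9,10) by (auto simp: Bm_def)

lemma redf_notBm: "B \<notin> Bm n m \<Longrightarrow> redf n m f B = 0"
  unfolding redf_def using tab_Bm by (intro sum.neutral) auto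

lemma redf_sum_gen:
  "finite I \<Longrightarrow> redf n m (\<lambda>S. \<Sum>i\<in>I. g i S) B = (\<Sum>i\<in>I. redf n m (g i) B)"
  using redf_lin[where c="\<lambda>_. 1" and g=g and I=I and n=n and m=m and B=B] by simp

lemma redf_comb:
  "redf n m (\<lambda>S. a * g S - h S) B = a * redf n m g B - redf n m h B"
  unfolding redf_def sum_distrib_left left_diff_distrib sum_subtractf
  by (simp add: mult.assoc)

lemma tab_group:
  "(\<Sum>T\<in>tabs [n,m]. f T * of_int (sgnT (n+m) T) * h (set (T!1)))
   = (\<Sum>B\<in>Bm n m. redf n m f B * h B)"
proof -
  have "(\<Sum>T\<in>tabs [n,m]. f T * of_int (sgnT (n+m) T) * h (set (T!1)))
     = (\<Sum>B\<in>Bm n m. \<Sum>T\<in>{T\<in>tabs [n,m]. set (T!1) = B}. f T * of_int (sgnT (n+m) T) * h (set (T!1)))"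
    by (rule sum.group[symmetric]) (use tab_Bm in \<open>auto simp: tabs_finite finite_Bm\<close>)
  also have "\<dots> = (\<Sum>B\<in>Bm n m. redf n m f B * h B)"
    unfolding redf_def sum_distrib_right by (intro sum.cong refl) auto
  finally show ?thesis .
qed

lemma swap_tab:
  assumes T: "T \<in> tabs [n,m]" and x: "x \<in> set (T!0)" and y: "y \<in> set (T!1)"
  shows "tab_act (transpose x y) T \<in> tabs [n,m]"
    "sgnT (n+m) (tab_act (transpose x y) T) = - sgnT (n+m) T"
    "set (tab_act (transpose x y) T ! 1) = insert x (set (T!1) - {y})"
proof -
  have xy: "x \<noteq> y" "x \<notin> set (T!1)" using tab2(6)[OF T] x y by auto
  have xyN: "x \<in> {1..n+m}" "y \<in> {1..n+m}" using tab2(7)[OF T] x y by auto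
  have p: "transpose x y permutes {1..n+m}" using permutes_swap_id xyN by metis
  show "tab_act (transpose x y) T \<in> tabs [n,m]" using tab_act_tabs[of _ "[n,m]"] p T by simp
  show "sgnT (n+m) (tab_act (transpose x y) T) = - sgnT (n+m) T"
    using sgnT_tab_act[OF p T] xy by (simp add: sign_swap_id)
  have "set (tab_act (transpose x y) T ! 1) = transpose x y ` set (T!1)"
    using tab2(11)[OF T] by (simp add: nth_tab_act)
  also have "\<dots> = insert x (set (T!1) - {y})"
  proof (intro equalityI subsetI)
    fix z assume "z \<in> transpose x y ` set (T!1)"
    then obtain w where w: "w \<in> set (T!1)" "z = transpose x y w" by blast
    then show "z \<in> insert x (set (T ! 1) - {y})" using xy by (auto simp: transpose_def)
  next
    fix z assume z: "z \<in> insert x (set (T ! 1) - {y})"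
    show "z \<in> transpose x y ` set (T!1)"
    proof (cases "z = x")
      case True then show ?thesis using y by (auto intro!: image_eqI[of _ _ y])
    next
      case False then show ?thesis using z xy by (auto intro!: image_eqI[of _ _ z])
    qed
  qed
  finally show "set (tab_act (transpose x y) T ! 1) = insert x (set (T!1) - {y})" .
qed

lemma comb1:
  assumes B: "B \<in> Bm n m" and B': "B' \<in> Bm n m" and y: "y \<in> B"
  shows "(if B = B' then 1 else 0) + card {x\<in>{1..n+m} - B. insert x (B - {y}) = B'}
       = (if B - {y} \<subseteq> B' then 1 else (0::nat))"
proof -
  have fB: "finite B" "finite B'" using B B' finite_subset by (auto simp: Bm_def)
  show ?thesis
  proof (cases "B = B'")
    case True
    then have "{x\<in>{1..n+m} - B. insert x (B - {y}) = B'} = {}" by auto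
    then show ?thesis using True by auto
  next
    case False
    show ?thesis
    proof (cases "B - {y} \<subseteq> B'")
      case sub: True
      have "card (B' - (B - {y})) = card B' - card (B - {y})"
        using sub fB by (simp add: card_Diff_subset)
      also have "\<dots> = 1"
      proof -
        have "card B = m" "card B' = m" using B B' by (auto simp: Bm_def)
        moreover have "card B > 0" using y fB by (auto simp: card_gt_0_iff)
        ultimately show ?thesis using y fB by (simp add: card_Diff_singleton)
      qed
      finally obtain x0 where x0: "B' - (B - {y}) = {x0}" by (meson card_1_singletonE)
      have x0y: "x0 \<noteq> y"
      proof
        assume "x0 = y"
        then have "B' = insert y (B - {y})" using x0 sub by blast
        then have "B' = B" using y by auto
        then show False using False by simp
      qed
      have "{x\<in>{1..n+m} - B. insert x (B - {y}) = B'} = {x0}"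
      proof (intro equalityI subsetI)
        fix x assume x: "x \<in> {x\<in>{1..n+m} - B. insert x (B - {y}) = B'}"
        then have "x \<in> B' - (B - {y})" by auto
        then show "x \<in> {x0}" using x0 by simp
      next
        fix x assume "x \<in> {x0}"
        then have xx: "x = x0" by simp
        have "x0 \<in> B'" "x0 \<notin> B - {y}" using x0 by auto
        then have "x0 \<in> {1..n+m}" "x0 \<notin> B" using B' x0y by (auto simp: Bm_def)
        moreover have "insert x0 (B - {y}) = B'" using x0 sub by blast
        ultimately show "x \<in> {x\<in>{1..n+m} - B. insert x (B - {y}) = B'}" using xx by simp
      qed
      then show ?thesis using False sub by simp
    next
      case nsub: False
      then have "{x\<in>{1..n+m} - B. insert x (B - {y}) = B'} = {}" by auto
      then show ?thesis using False nsub by simp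
    qed
  qed
qed

lemma sum_nth_set:
  assumes "distinct xs" "length xs = m"
  shows "(\<Sum>j\<in>{1..m}. g (xs ! (j - 1))) = (\<Sum>y\<in>set xs. g y)"
proof -
  have "(\<Sum>j\<in>{1..m}. g (xs ! (j - 1))) = (\<Sum>i\<in>{..<m}. g (xs ! i))"
    by (rule sum.reindex_bij_witness[of _ Suc "\<lambda>j. j - 1"]) auto
  also have "\<dots> = sum_list (map g xs)" using assms
    by (simp add: sum_list_sum_nth atLeast0LessThan)
  also have "\<dots> = (\<Sum>y\<in>set xs. g y)" using assms by (simp add: sum.distinct_set_conv_list)
  finally show ?thesis .
qed

lemma redf_eta_tab:
  assumes T: "T \<in> tabs [n,m]" and B': "B' \<in> Bm n m"
  shows "redf n m (\<lambda>S. of_nat m * delta T S - (\<Sum>j\<in>{1..m}. piop 1 j T S)) B'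
       = of_int (sgnT (n+m) T) * of_nat (card {y\<in>set (T!1). set (T!1) - {y} \<subseteq> B'})"
proof -
  let ?B = "set (T!1)" and ?s = "of_int (sgnT (n+m) T) :: complex"
  have BB: "?B \<in> Bm n m" using tab_Bm[OF T] .
  have piop: "redf n m (piop 1 j T) B' = - ?s * of_nat (card {x\<in>{1..n+m} - ?B. insert x (?B - {T!1!(j-1)}) = B'})"
    if j: "j \<in> {1..m}" for j
  proof -
    let ?y = "T!1!(j-1)"
    have y: "?y \<in> ?B" using j tab2(3)[OF T] by auto
    have "redf n m (piop 1 j T) B' = (\<Sum>x\<in>set (T!0). redf n m (delta (tab_act (transpose x ?y) T)) B')"
      unfolding piop_def by (simp add: redf_sum_gen)
    also have "\<dots> = (\<Sum>x\<in>set (T!0). if insert x (?B - {?y}) = B' then - ?s else 0)"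
    proof (rule sum.cong[OF refl])
      fix x assume x: "x \<in> set (T!0)"
      note st = swap_tab[OF T x y]
      show "redf n m (delta (tab_act (transpose x ?y) T)) B' = (if insert x (?B - {?y}) = B' then - ?s else 0)"
        unfolding redf_delta using st by simp
    qed
    also have "\<dots> = (\<Sum>x\<in>{x\<in>{1..n+m} - ?B. insert x (?B - {?y}) = B'}. - ?s)"
      using tab2(8)[OF T] by (simp add: sum.inter_filter[symmetric])
    also have "\<dots> = - ?s * of_nat (card {x\<in>{1..n+m} - ?B. insert x (?B - {?y}) = B'})" by simp
    finally show ?thesis .
  qed
  have "redf n m (\<lambda>S. of_nat m * delta T S - (\<Sum>j\<in>{1..m}. piop 1 j T S)) B'
      = of_nat m * redf n m (delta T) B' - (\<Sum>j\<in>{1..m}. redf n m (piop 1 j T) B')"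
    by (simp add: redf_comb redf_sum_gen)
  also have "\<dots> = of_nat m * redf n m (delta T) B' - (\<Sum>j\<in>{1..m}. - ?s * of_nat (card {x\<in>{1..n+m} - ?B. insert x (?B - {T!1!(j-1)}) = B'}))"
    by (rule arg_cong2[where f=minus, OF refl sum.cong[OF refl piop]])
  also have "\<dots> = ?s * (of_nat m * (if ?B = B' then 1 else 0)
      + (\<Sum>j\<in>{1..m}. of_nat (card {x\<in>{1..n+m} - ?B. insert x (?B - {T!1!(j-1)}) = B'})))"
  proof -
    have rd: "redf n m (delta T) B' = ?s * (if ?B = B' then 1 else 0)" using T by (simp add: redf_delta)
    have aux: "\<And>(k::complex) s a Y. k * (s * a) - (- s * Y) = s * (k * a + Y)" by (simp add: algebra_simps)
    show ?thesis unfolding rd sum_distrib_left[symmetric] by (rule aux)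
  qed
  also have "(\<Sum>j\<in>{1..m}. of_nat (card {x\<in>{1..n+m} - ?B. insert x (?B - {T!1!(j-1)}) = B'}) :: complex)
     = (\<Sum>y\<in>?B. of_nat (card {x\<in>{1..n+m} - ?B. insert x (?B - {y}) = B'}))"
    by (rule sum_nth_set[OF tab2(5,3)[OF T]])
  also have "of_nat m * (if ?B = B' then 1 else 0) = (\<Sum>y\<in>?B. (if ?B = B' then 1 else 0 :: complex))"
    using tab2(10)[OF T] by simp
  also have "(\<Sum>y\<in>?B. (if ?B = B' then 1 else 0 :: complex)) + (\<Sum>y\<in>?B. of_nat (card {x\<in>{1..n+m} - ?B. insert x (?B - {y}) = B'}))
      = (\<Sum>y\<in>?B. (if ?B = B' then 1 else 0 :: complex) + of_nat (card {x\<in>{1..n+m} - ?B. insert x (?B - {y}) = B'}))"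
    by (rule sum.distrib[symmetric])
  also have "\<dots> = (\<Sum>y\<in>?B. of_nat (if ?B - {y} \<subseteq> B' then 1 else 0))"
  proof (rule sum.cong[OF refl])
    fix y assume y: "y \<in> ?B"
    have "(if ?B = B' then 1 else 0 :: complex) + of_nat (card {x\<in>{1..n+m} - ?B. insert x (?B - {y}) = B'})
        = of_nat ((if ?B = B' then 1 else 0) + card {x\<in>{1..n+m} - ?B. insert x (?B - {y}) = B'})"
      by simp
    also have "\<dots> = of_nat (if ?B - {y} \<subseteq> B' then 1 else 0)"
      by (simp only: comb1[OF BB B' y])
    finally show "(if ?B = B' then 1 else 0 :: complex) + of_nat (card {x\<in>{1..n+m} - ?B. insert x (?B - {y}) = B'})
        = of_nat (if ?B - {y} \<subseteq> B' then 1 else 0)" .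
  qed
  also have "\<dots> = of_nat (card {y\<in>?B. ?B - {y} \<subseteq> B'})"
    by (simp add: sum.inter_filter[symmetric] of_nat_sum[symmetric])
  finally show ?thesis .
qed


lemma card_y_C:
  assumes B: "B \<in> Bm n m"
  shows "card {y\<in>B. B - {y} \<subseteq> B'} = card {C\<in>Cm n m. C \<subseteq> B' \<and> C \<subseteq> B}"
proof (rule bij_betw_same_card[of "\<lambda>y. B - {y}"])
  have fB: "finite B" using B finite_subset by (auto simp: Bm_def)
  show "bij_betw (\<lambda>y. B - {y}) {y \<in> B. B - {y} \<subseteq> B'} {C \<in> Cm n m. C \<subseteq> B' \<and> C \<subseteq> B}"
  proof (rule bij_betwI')
    fix x y assume "x \<in> {y \<in> B. B - {y} \<subseteq> B'}" "y \<in> {y \<in> B. B - {y} \<subseteq> B'}"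
    then show "(B - {x} = B - {y}) = (x = y)" by auto
  next
    fix y assume y: "y \<in> {y \<in> B. B - {y} \<subseteq> B'}"
    have "card B > 0" using y fB by (auto simp: card_gt_0_iff)
    then have "card (B - {y}) + 1 = m" using y B fB
      by (auto simp: Bm_def card_Diff_singleton)
    then show "B - {y} \<in> {C \<in> Cm n m. C \<subseteq> B' \<and> C \<subseteq> B}" using y B by (auto simp: Cm_def Bm_def)
  next
    fix C assume C: "C \<in> {C \<in> Cm n m. C \<subseteq> B' \<and> C \<subseteq> B}"
    have "C \<subseteq> B" using C by simp
    then have "card (B - C) = card B - card C" using fB by (meson card_Diff_subset finite_subset)
    also have "\<dots> = 1" using C B by (auto simp: Cm_def Bm_def)
    finally obtain y where y: "B - C = {y}" by (meson card_1_singletonE)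
    then have "C = B - {y}" "y \<in> B" using C by auto
    then show "\<exists>y\<in>{y \<in> B. B - {y} \<subseteq> B'}. C = B - {y}" using C by auto
  qed
qed

lemma redf_eta:
  "redf n m (eta n m f) B' = Dt n m (Dop n m (redf n m f)) B'"
proof (cases "B' \<in> Bm n m")
  case False
  then show ?thesis by (simp add: redf_notBm Dt_def)
next
  case B': True
  have "redf n m (eta n m f) B' =
    (\<Sum>T\<in>tabs [n,m]. f T * redf n m (\<lambda>S. of_nat m * delta T S - (\<Sum>j\<in>{1..m}. piop 1 j T S)) B')"
    unfolding eta_def by (rule redf_lin[OF tabs_finite])
  also have "\<dots> = (\<Sum>T\<in>tabs [n,m]. f T * of_int (sgnT (n+m) T) * of_nat (card {y\<in>set (T!1). set (T!1) - {y} \<subseteq> B'}))"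
  proof (rule sum.cong[OF refl])
    fix T assume T: "T \<in> tabs [n,m]"
    show "f T * redf n m (\<lambda>S. of_nat m * delta T S - (\<Sum>j\<in>{1..m}. piop 1 j T S)) B' =
      f T * of_int (sgnT (n+m) T) * of_nat (card {y\<in>set (T!1). set (T!1) - {y} \<subseteq> B'})"
      using redf_eta_tab[OF T B'] by (simp add: mult.assoc)
  qed
  also have "\<dots> = (\<Sum>B\<in>Bm n m. redf n m f B * of_nat (card {y\<in>B. B - {y} \<subseteq> B'}))"
    by (rule tab_group)
  also have "\<dots> = (\<Sum>B\<in>Bm n m. redf n m f B * of_nat (card {C\<in>Cm n m. C \<subseteq> B' \<and> C \<subseteq> B}))"
    by (rule sum.cong[OF refl]) (simp add: card_y_C)
  also have "\<dots> = (\<Sum>B\<in>Bm n m. \<Sum>C\<in>{C\<in>Cm n m. C \<subseteq> B' \<and> C \<subseteq> B}. redf n m f B)"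
    by (simp add: mult.commute)
  also have "\<dots> = (\<Sum>B\<in>Bm n m. \<Sum>C\<in>{C\<in>{C\<in>Cm n m. C \<subseteq> B'}. C \<subseteq> B}. redf n m f B)"
    by (rule sum.cong[OF refl]) (rule sum.cong, auto)
  also have "\<dots> = (\<Sum>C\<in>{C\<in>Cm n m. C \<subseteq> B'}. \<Sum>B\<in>{B\<in>Bm n m. C \<subseteq> B}. redf n m f B)"
    by (rule sum.swap_restrict) (auto simp: finite_Bm finite_Cm)
  also have "\<dots> = Dt n m (Dop n m (redf n m f)) B'"
    using B' by (simp add: Dt_def Dop_def)
  finally show ?thesis .
qed

lemma Dt_adj:
  "(\<Sum>B\<in>Bm n m. cnj (a B) * Dt n m u B) = (\<Sum>C\<in>Cm n m. u C * cnj (Dop n m a C))"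
proof -
  have "(\<Sum>B\<in>Bm n m. cnj (a B) * Dt n m u B) = (\<Sum>B\<in>Bm n m. \<Sum>C\<in>{C\<in>Cm n m. C \<subseteq> B}. cnj (a B) * u C)"
    by (rule sum.cong[OF refl]) (simp add: Dt_def sum_distrib_left)
  also have "\<dots> = (\<Sum>C\<in>Cm n m. \<Sum>B\<in>{B\<in>Bm n m. C \<subseteq> B}. cnj (a B) * u C)"
    by (rule sum.swap_restrict) (auto simp: finite_Bm finite_Cm)
  also have "\<dots> = (\<Sum>C\<in>Cm n m. u C * cnj (Dop n m a C))"
    by (rule sum.cong[OF refl]) (simp add: Dop_def sum_distrib_left sum_distrib_right mult.commute)
  finally show ?thesis .
qed

lemma sum_cnj_zero:
  assumes "finite A" "(\<Sum>x\<in>A. z x * cnj (z x)) = 0"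
  shows "\<forall>x\<in>A. z x = (0::complex)"
proof -
  have "(\<Sum>x\<in>A. z x * cnj (z x)) = (\<Sum>x\<in>A. complex_of_real ((norm (z x))\<^sup>2))"
    by (rule sum.cong[OF refl]) (rule complex_norm_square[symmetric])
  also have "\<dots> = complex_of_real (\<Sum>x\<in>A. (norm (z x))\<^sup>2)" by (rule of_real_sum[symmetric])
  finally have "(\<Sum>x\<in>A. z x * cnj (z x)) = complex_of_real (\<Sum>x\<in>A. (norm (z x))\<^sup>2)" .
  then have "complex_of_real (\<Sum>x\<in>A. (norm (z x))\<^sup>2) = 0" using assms(2) by simp
  then have "(\<Sum>x\<in>A. (norm (z x))\<^sup>2) = 0" by (simp only: of_real_eq_0_iff)
  then have "\<forall>x\<in>A. (norm (z x))\<^sup>2 = 0" using assms(1) by (subst (asm) sum_nonneg_eq_0_iff) auto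
  then show ?thesis by simp
qed

definition Hop :: "nat \<Rightarrow> nat \<Rightarrow> (nat set \<Rightarrow> complex) \<Rightarrow> nat set \<Rightarrow> complex" where
  "Hop n m v = Dt n m (Dop n m v)"

lemma Hop_ki:
  assumes "Hop n m (Hop n m v) = (\<lambda>_. 0)"
  shows "Hop n m v = (\<lambda>_. 0)"
proof -
  define w where "w = Hop n m v"
  have "(\<Sum>B\<in>Bm n m. cnj (w B) * Hop n m w B) = 0" using assms by (simp add: w_def)
  then have "(\<Sum>C\<in>Cm n m. Dop n m w C * cnj (Dop n m w C)) = 0"
    unfolding Hop_def Dt_adj .
  then have D0: "\<forall>C\<in>Cm n m. Dop n m w C = 0" by (rule sum_cnj_zero[OF finite_Cm])
  have "(\<Sum>B\<in>Bm n m. w B * cnj (w B)) = (\<Sum>B\<in>Bm n m. cnj (w B) * Dt n m (Dop n m v) B)"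
    by (simp add: w_def Hop_def mult.commute)
  also have "\<dots> = (\<Sum>C\<in>Cm n m. Dop n m v C * cnj (Dop n m w C))" by (rule Dt_adj)
  also have "\<dots> = 0" using D0 by simp
  finally have "\<forall>B\<in>Bm n m. w B = 0" by (rule sum_cnj_zero[OF finite_Bm])
  moreover have "\<forall>B. B \<notin> Bm n m \<longrightarrow> w B = 0" by (simp add: w_def Hop_def Dt_def)
  ultimately show ?thesis unfolding w_def[symmetric] by auto
qed

lemma Hop_zero_harm:
  assumes H: "Hop n m v = (\<lambda>_. 0)" and C: "C \<subseteq> {1..n+m}" "card C + 1 = m"
  shows "(\<Sum>x\<in>{1..n+m} - C. v (insert x C)) = 0"
proof -
  have "(\<Sum>B\<in>Bm n m. cnj (v B) * Hop n m v B) = 0" using H by simp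
  then have "(\<Sum>C\<in>Cm n m. Dop n m v C * cnj (Dop n m v C)) = 0"
    unfolding Hop_def Dt_adj .
  then have D0: "\<forall>C\<in>Cm n m. Dop n m v C = 0" by (rule sum_cnj_zero[OF finite_Cm])
  have fC: "finite C" using C finite_subset by auto
  have "(\<Sum>x\<in>{1..n+m} - C. v (insert x C)) = (\<Sum>B\<in>(\<lambda>x. insert x C) ` ({1..n+m} - C). v B)"
    by (subst sum.reindex) (auto intro!: inj_onI simp: comp_def)
  also have "(\<lambda>x. insert x C) ` ({1..n+m} - C) = {B\<in>Bm n m. C \<subseteq> B}"
  proof (intro equalityI subsetI)
    fix B assume "B \<in> (\<lambda>x. insert x C) ` ({1..n+m} - C)"
    then show "B \<in> {B\<in>Bm n m. C \<subseteq> B}" using C fC by (auto simp: Bm_def)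
  next
    fix B assume B: "B \<in> {B\<in>Bm n m. C \<subseteq> B}"
    have fB: "finite B" using B finite_subset by (auto simp: Bm_def)
    have "card (B - C) = card B - card C" using B fC by (simp add: card_Diff_subset)
    also have "\<dots> = 1" using C B by (auto simp: Bm_def)
    finally obtain x where x: "B - C = {x}" by (meson card_1_singletonE)
    then have "B = insert x C" "x \<in> {1..n+m} - C" using B by (auto simp: Bm_def)
    then show "B \<in> (\<lambda>x. insert x C) ` ({1..n+m} - C)" by blast
  qed
  also have "(\<Sum>B\<in>{B\<in>Bm n m. C \<subseteq> B}. v B) = Dop n m v C" by (simp add: Dop_def)
  also have "\<dots> = 0" using D0 C by (simp add: Cm_def)
  finally show ?thesis .
qed


lemma tab_pos_unique:
  assumes T: "T \<in> tabs [n,m]" and c: "c < 2" "c' < 2" and i: "i < length (T!c)" "i' < length (T!c')"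
    and e: "T!c!i = T!c'!i'"
  shows "c = c' \<and> i = i'"
proof -
  note t = tab2[OF T]
  have d: "distinct (T!0 @ T!1)" using t(4,5,6) by simp
  consider "c = 0" "c' = 0" | "c = 0" "c' = 1" | "c = 1" "c' = 0" | "c = 1" "c' = 1" using c by linarith
  then show ?thesis
  proof cases
    case 1 then show ?thesis using e i t(4) by (simp add: nth_eq_iff_index_eq)
  next
    case 2 then show ?thesis using e i t(6) by (metis disjoint_iff nth_mem)
  next
    case 3 then show ?thesis using e i t(6) by (metis disjoint_iff nth_mem)
  next
    case 4 then show ?thesis using e i t(5) by (simp add: nth_eq_iff_index_eq)
  qed
qed

lemma rowof_nth:
  assumes T: "T \<in> tabs [n,m]" and c: "c < 2" and i: "i < length (T!c)"
  shows "rowof T (T!c!i) = i"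
proof -
  have len: "length T = 2" using tab2(11)[OF T] .
  have mem: "T!c!i \<in> set (concat T)" using c i len by (auto intro!: bexI[of _ "T!c"])
  have "(THE i'. \<exists>c'<length T. i' < length (T!c') \<and> T!c'!i' = T!c!i) = i"
  proof (rule the_equality)
    show "\<exists>c'<length T. i < length (T!c') \<and> T!c'!i = T!c!i" using c i len by auto
  next
    fix i' assume "\<exists>c'<length T. i' < length (T!c') \<and> T!c'!i' = T!c!i"
    then obtain c' where "c' < 2" "i' < length (T!c')" "T!c'!i' = T!c!i" using len by auto
    then show "i' = i" using tab_pos_unique[OF T] c i by metis
  qed
  then show ?thesis using mem by (simp add: rowof_def)
qed

lemma tab_mem_pos:
  assumes T: "T \<in> tabs [n,m]" and x: "x \<in> {1..n+m}"
  obtains c i where "c < 2" "i < length (T!c)" "T!c!i = x"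
proof -
  have "x \<in> set (T!0) \<union> set (T!1)" using tab2(7)[OF T] x by simp
  then show ?thesis
  proof
    assume "x \<in> set (T!0)"
    then obtain i where "i < length (T!0)" "T!0!i = x" by (auto simp: in_set_conv_nth)
    then show ?thesis using that[of 0 i] by simp
  next
    assume "x \<in> set (T!1)"
    then obtain i where "i < length (T!1)" "T!1!i = x" by (auto simp: in_set_conv_nth)
    then show ?thesis using that[of 1 i] by simp
  qed
qed

lemma rowof_lt_n:
  assumes T: "T \<in> tabs [n,m]" and mn: "m \<le> n" and x: "x \<in> {1..n+m}"
  shows "rowof T x < n"
proof -
  obtain c i where ci: "c < 2" "i < length (T!c)" "T!c!i = x" using tab_mem_pos[OF T x] by blast
  have "length (T!c) \<le> n" using ci(1) tab2(2,3)[OF T] mn by (cases c) auto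
  then show ?thesis using rowof_nth[OF T ci(1,2)] ci by simp
qed

lemma rowof_tab_act:
  assumes T: "T \<in> tabs [n,m]" and s: "s permutes {1..n+m}"
  shows "rowof (tab_act s T) (s y) = rowof T y"
proof (cases "y \<in> {1..n+m}")
  case True
  obtain c i where ci: "c < 2" "i < length (T!c)" "T!c!i = y" using tab_mem_pos[OF T True] by blast
  have sT: "tab_act s T \<in> tabs [n,m]" using tab_act_tabs[of s "[n,m]" T] s T by simp
  have len: "length T = 2" using tab2(11)[OF T] .
  have "tab_act s T ! c ! i = s y" using ci len by (simp add: nth_tab_act)
  moreover have "i < length (tab_act s T ! c)" using ci len by (simp add: nth_tab_act)
  ultimately have "rowof (tab_act s T) (s y) = i" using rowof_nth[OF sT ci(1)] by metis
  then show ?thesis using rowof_nth[OF T ci(1,2)] ci(3) by simp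
next
  case False
  have sT: "tab_act s T \<in> tabs [n,m]" using tab_act_tabs[of s "[n,m]" T] s T by simp
  have "s y = y" using permutes_not_in[OF s False] .
  moreover have "y \<notin> set (concat T)" "y \<notin> set (concat (tab_act s T))"
    using tabsD(3)[OF T] tabsD(3)[OF sT] False by auto
  ultimately show ?thesis by (simp add: rowof_def)
qed

lemma tab_act_comp: "tab_act s (tab_act t T) = tab_act (s \<circ> t) T"
  by (simp add: tab_act_def)

lemma tab_act_id: "tab_act id T = T"
  by (simp add: tab_act_def)

definition Qf :: "nat \<Rightarrow> nat \<Rightarrow> (nat \<Rightarrow> nat) \<Rightarrow> nat set \<Rightarrow> complex" where
  "Qf n m r B = (\<Sum>T'\<in>{T'\<in>tabs [n,m]. rowof T' = r \<and> set (T'!1) = B}. of_int (sgnT (n+m) T'))"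

lemma polytab_Q:
  assumes T: "T \<in> tabs [n,m]"
  shows "polytab T r = of_int (sgnT (n+m) T) * Qf n m r (set (T!1))"
proof -
  let ?A = "{T'\<in>tabs [n,m]. set (T'!1) = set (T!1)}"
  have bij: "bij_betw (\<lambda>b. tab_act b T) (colstab T) ?A"
  proof (rule bij_betwI')
    fix b b' assume b: "b \<in> colstab T" and b': "b' \<in> colstab T"
    show "(tab_act b T = tab_act b' T) = (b = b')"
      using tab_act_inj[OF T colstab_permutes[OF b T] colstab_permutes[OF b' T]] by auto
  next
    fix b assume b: "b \<in> colstab T"
    show "tab_act b T \<in> ?A"
      using tab_act_tabs[of b "[n,m]" T] colstab_permutes[OF b T] T colstab_col1[OF b T] by simp
  next
    fix T' assume T': "T' \<in> ?A"
    then obtain b where "b \<in> colstab T" "tab_act b T = T'" using same_cols[OF T, of T'] by auto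
    then show "\<exists>b\<in>colstab T. T' = tab_act b T" by auto
  qed
  have sg: "of_int (sign b) = (of_int (sgnT (n+m) (tab_act b T) * sgnT (n+m) T) :: complex)"
    if b: "b \<in> colstab T" for b
  proof -
    have "sgnT (n+m) (tab_act b T) = sign b * sgnT (n+m) T"
      by (rule sgnT_tab_act[OF colstab_permutes[OF b T] T]) simp
    then show ?thesis by (simp add: mult.assoc)
  qed
  have "polytab T r = (\<Sum>b\<in>colstab T. of_int (sgnT (n+m) T) * (of_int (sgnT (n+m) (tab_act b T)) * (if r = rowof (tab_act b T) then 1 else 0)))"
    unfolding polytab_def by (rule sum.cong[OF refl]) (simp add: sg)
  also have "\<dots> = of_int (sgnT (n+m) T) * (\<Sum>T'\<in>?A. of_int (sgnT (n+m) T') * (if r = rowof T' then 1 else 0))"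
    unfolding sum_distrib_left[symmetric]
    by (rule arg_cong[where f="(*) _"], rule sum.reindex_bij_betw[OF bij])
  also have "(\<Sum>T'\<in>?A. of_int (sgnT (n+m) T') * (if r = rowof T' then 1 else 0)) = Qf n m r (set (T!1))"
  proof -
    have "(\<Sum>T'\<in>?A. of_int (sgnT (n+m) T') * (if r = rowof T' then 1 else 0))
        = (\<Sum>T'\<in>?A. if r = rowof T' then of_int (sgnT (n+m) T') else (0::complex))"
      by (rule sum.cong) auto
    also have "\<dots> = (\<Sum>T'\<in>{T'\<in>?A. r = rowof T'}. of_int (sgnT (n+m) T'))"
      by (rule sum.inter_filter[symmetric]) (simp add: tabs_finite)
    also have "{T'\<in>?A. r = rowof T'} = {T'\<in>tabs [n,m]. rowof T' = r \<and> set (T'!1) = set (T!1)}" by auto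
    finally show ?thesis unfolding Qf_def .
  qed
  finally show ?thesis .
qed

lemma alpha_Q:
  "alpha [n,m] f r = (\<Sum>B\<in>Bm n m. redf n m f B * Qf n m r B)"
proof -
  have "alpha [n,m] f r = (\<Sum>T\<in>tabs [n,m]. f T * of_int (sgnT (n+m) T) * Qf n m r (set (T!1)))"
    unfolding alpha_def by (rule sum.cong[OF refl]) (simp add: polytab_Q mult.assoc)
  also have "\<dots> = (\<Sum>B\<in>Bm n m. redf n m f B * Qf n m r B)" by (rule tab_group)
  finally show ?thesis .
qed

lemma garnir:
  assumes mn: "m \<le> n" and C: "C \<in> Cm n m"
  shows "(\<Sum>B\<in>{B\<in>Bm n m. C \<subseteq> B}. Qf n m r B) = 0"
proof -
  let ?S = "{T'\<in>tabs [n,m]. rowof T' = r \<and> C \<subseteq> set (T'!1)}"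
  have fS: "finite ?S" using tabs_finite by simp
  have "(\<Sum>B\<in>{B\<in>Bm n m. C \<subseteq> B}. Qf n m r B)
     = (\<Sum>B\<in>{B\<in>Bm n m. C \<subseteq> B}. \<Sum>T'\<in>{T'\<in>?S. set (T'!1) = B}. of_int (sgnT (n+m) T'))"
    unfolding Qf_def by (intro sum.cong refl) auto
  also have "\<dots> = (\<Sum>T'\<in>?S. of_int (sgnT (n+m) T'))"
    by (rule sum.group) (use tab_Bm in \<open>auto simp: finite_Bm tabs_finite\<close>)
  also have "\<dots> = 0"
  proof (cases "?S = {}")
    case True then show ?thesis by (simp only: True sum.empty)
  next
    case False
    then obtain T0 where T0: "T0 \<in> tabs [n,m]" "rowof T0 = r" "C \<subseteq> set (T0!1)" by blast
    let ?X = "{1..n+m} - C"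
    have CN: "C \<subseteq> {1..n+m}" "card C + 1 = m" using C by (auto simp: Cm_def)
    have cX: "card ?X = n + 1" using CN by (simp add: card_Diff_subset finite_subset)
    have "\<not> inj_on (rowof T0) ?X"
    proof
      assume inj: "inj_on (rowof T0) ?X"
      have "rowof T0 ` ?X \<subseteq> {..<n}" using rowof_lt_n[OF T0(1) mn] by auto
      then have "card ?X \<le> card {..<n}" using card_inj_on_le[OF inj] by blast
      then show False using cX by simp
    qed
    then obtain a b where ab: "a \<in> ?X" "b \<in> ?X" "a \<noteq> b" "rowof T0 a = rowof T0 b"
      unfolding inj_on_def by blast
    let ?g = "transpose a b"
    have pg: "?g permutes {1..n+m}" using ab permutes_swap_id by (metis DiffD1)
    have gmap: "tab_act ?g T' \<in> ?S" and gs: "sgnT (n+m) (tab_act ?g T') = - sgnT (n+m) T'"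
      and gg: "tab_act ?g (tab_act ?g T') = T'" if T': "T' \<in> ?S" for T'
    proof -
      have T'1: "T' \<in> tabs [n,m]" using T' by simp
      show "sgnT (n+m) (tab_act ?g T') = - sgnT (n+m) T'"
        using sgnT_tab_act[OF pg T'1] ab(3) by (simp add: sign_swap_id)
      show "tab_act ?g (tab_act ?g T') = T'" by (simp add: tab_act_comp tab_act_id)
      have t1: "tab_act ?g T' \<in> tabs [n,m]" using tab_act_tabs[of ?g "[n,m]" T'] pg T'1 by simp
      have "rowof (tab_act ?g T') z = rowof T' z" for z
      proof -
        have "rowof (tab_act ?g T') z = rowof (tab_act ?g T') (?g (?g z))" by simp
        also have "\<dots> = rowof T' (?g z)" by (rule rowof_tab_act[OF T'1 pg])
        also have "\<dots> = rowof T' z"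
          using T' T0(2) ab(4) by (auto simp: transpose_def)
        finally show ?thesis .
      qed
      then have r1: "rowof (tab_act ?g T') = r" using T' by auto
      have "set (tab_act ?g T' ! 1) = ?g ` set (T'!1)"
        using tab2(11)[OF T'1] by (simp add: nth_tab_act)
      moreover have "C \<subseteq> ?g ` set (T'!1)"
      proof
        fix z assume z: "z \<in> C"
        then have "z \<noteq> a" "z \<noteq> b" using ab by auto
        then have "?g z = z" by simp
        moreover have "z \<in> set (T'!1)" using z T' by auto
        ultimately show "z \<in> ?g ` set (T'!1)" by (metis image_eqI)
      qed
      ultimately show "tab_act ?g T' \<in> ?S" using t1 r1 by simp
    qed
    have bij: "bij_betw (tab_act ?g) ?S ?S"
      by (rule bij_betw_byWitness[where f'="tab_act ?g"]) (use gmap gg in auto)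
    have "(\<Sum>T'\<in>?S. of_int (sgnT (n+m) T')) = (\<Sum>T'\<in>?S. of_int (sgnT (n+m) (tab_act ?g T')) :: complex)"
      by (rule sum.reindex_bij_betw[OF bij, symmetric])
    also have "\<dots> = - (\<Sum>T'\<in>?S. of_int (sgnT (n+m) T'))"
      by (simp add: gs sum_negf)
    finally show ?thesis by simp
  qed
  finally show ?thesis .
qed

lemma alpha_eta:
  assumes mn: "m \<le> n"
  shows "alpha [n,m] (eta n m f) r = 0"
proof -
  let ?v = "redf n m f"
  have "alpha [n,m] (eta n m f) r = (\<Sum>B\<in>Bm n m. Dt n m (Dop n m ?v) B * Qf n m r B)"
    unfolding alpha_Q redf_eta ..
  also have "\<dots> = (\<Sum>B\<in>Bm n m. \<Sum>C\<in>{C\<in>Cm n m. C \<subseteq> B}. Dop n m ?v C * Qf n m r B)"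
    by (rule sum.cong[OF refl]) (simp add: Dt_def sum_distrib_right)
  also have "\<dots> = (\<Sum>C\<in>Cm n m. \<Sum>B\<in>{B\<in>Bm n m. C \<subseteq> B}. Dop n m ?v C * Qf n m r B)"
    by (rule sum.swap_restrict) (auto simp: finite_Bm finite_Cm)
  also have "\<dots> = (\<Sum>C\<in>Cm n m. Dop n m ?v C * (\<Sum>B\<in>{B\<in>Bm n m. C \<subseteq> B}. Qf n m r B))"
    by (simp add: sum_distrib_left)
  also have "\<dots> = 0" using garnir[OF mn] by simp
  finally show ?thesis .
qed


lemma pel_Cons: "pel (pq # ps) = fst pq # snd pq # pel ps"
  by (cases pq) (simp add: pel_def)

lemma set_pel: "set (pel ps) = fst ` set ps \<union> snd ` set ps"
  by (induction ps) (auto simp: pel_Cons pel_def)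

lemma length_pel: "length (pel ps) = 2 * length ps"
  by (induction ps) (auto simp: pel_Cons, simp add: pel_def)

lemma pel_dist_all:
  "distinct (pel ps) \<Longrightarrow> \<forall>i<length ps. \<forall>j<length ps. fst (ps!i) \<noteq> snd (ps!j) \<and>
     (fst (ps!i) = fst (ps!j) \<longrightarrow> i = j) \<and> (snd (ps!i) = snd (ps!j) \<longrightarrow> i = j)"
proof (induction ps)
  case Nil then show ?case by simp
next
  case (Cons a ps)
  have d: "distinct (pel ps)" "fst a \<noteq> snd a" "fst a \<notin> set (pel ps)" "snd a \<notin> set (pel ps)"
    using Cons.prems by (auto simp: pel_Cons)
  have mem: "fst (ps!k) \<in> set (pel ps)" "snd (ps!k) \<in> set (pel ps)" if "k < length ps" for k
    using that by (auto simp: set_pel)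
  note IH = Cons.IH[OF d(1)]
  show ?case
  proof (intro allI impI)
    fix i j assume i: "i < length (a#ps)" and j: "j < length (a#ps)"
    show "fst ((a#ps)!i) \<noteq> snd ((a#ps)!j) \<and>
     (fst ((a#ps)!i) = fst ((a#ps)!j) \<longrightarrow> i = j) \<and> (snd ((a#ps)!i) = snd ((a#ps)!j) \<longrightarrow> i = j)"
    proof (cases i)
      case 0
      then show ?thesis
      proof (cases j)
        case 0 then show ?thesis using \<open>i = 0\<close> d by simp
      next
        case (Suc j')
        then have "j' < length ps" using j by simp
        then show ?thesis using \<open>i = 0\<close> Suc d mem by auto
      qed
    next
      case (Suc i')
      then have i': "i' < length ps" using i by simp
      show ?thesis
      proof (cases j)
        case 0 then show ?thesis using Suc i' d mem[OF i'] by auto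
      next
        case (Suc j')
        then have "j' < length ps" using j by simp
        then show ?thesis using \<open>i = Suc i'\<close> Suc i' IH by auto
      qed
    qed
  qed
qed

lemma pel_dist:
  assumes "distinct (pel ps)" "i < length ps" "j < length ps"
  shows "fst (ps!i) \<noteq> snd (ps!j)" "fst (ps!i) = fst (ps!j) \<Longrightarrow> i = j" "snd (ps!i) = snd (ps!j) \<Longrightarrow> i = j"
  using pel_dist_all[OF assms(1)] assms(2,3) by blast+


definition uu :: "(nat \<times> nat) list \<Rightarrow> nat set \<Rightarrow> nat \<Rightarrow> nat" where
  "uu ps S i = (if i \<in> S then fst (ps!i) else snd (ps!i))"
definition ww :: "(nat \<times> nat) list \<Rightarrow> nat set \<Rightarrow> nat \<Rightarrow> nat" where
  "ww ps S i = (if i \<in> S then snd (ps!i) else fst (ps!i))"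
definition restL :: "nat \<Rightarrow> nat \<Rightarrow> (nat \<times> nat) list \<Rightarrow> nat list" where
  "restL n m ps = sorted_list_of_set ({1..n+m} - set (pel ps))"
definition TS :: "nat \<Rightarrow> nat \<Rightarrow> (nat \<times> nat) list \<Rightarrow> nat set \<Rightarrow> nat list list" where
  "TS n m ps S = [map (uu ps S) [0..<length ps] @ restL n m ps, map (ww ps S) [0..<length ps]]"

context
  fixes n m :: nat and ps :: "(nat \<times> nat) list"
  assumes lp: "length ps = m" and dp: "distinct (pel ps)" and sp: "set (pel ps) \<subseteq> {1..n+m}" and mn: "m \<le> n"
begin

lemma fs_mem: "i < m \<Longrightarrow> fst (ps!i) \<in> set (pel ps)" "i < m \<Longrightarrow> snd (ps!i) \<in> set (pel ps)"
  using lp by (auto simp: set_pel)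

lemma uw_mem: "i < m \<Longrightarrow> uu ps S i \<in> set (pel ps)" "i < m \<Longrightarrow> ww ps S i \<in> set (pel ps)"
  using fs_mem by (auto simp: uu_def ww_def)

lemma uw_dist:
  assumes "i < m" "j < m"
  shows "uu ps S i \<noteq> ww ps S j" "uu ps S i = uu ps S j \<Longrightarrow> i = j" "ww ps S i = ww ps S j \<Longrightarrow> i = j"
proof -
  note pd = pel_dist[OF dp, unfolded lp, OF assms] pel_dist[OF dp, unfolded lp, OF assms(2,1)]
  show "uu ps S i \<noteq> ww ps S j" using pd by (auto simp: uu_def ww_def)
  show "uu ps S i = uu ps S j \<Longrightarrow> i = j" using pd by (auto simp: uu_def ww_def split: if_splits)
  show "ww ps S i = ww ps S j \<Longrightarrow> i = j" using pd by (auto simp: uu_def ww_def split: if_splits)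
qed

lemma fs_ne: "i < m \<Longrightarrow> fst (ps!i) \<noteq> snd (ps!i)"
  using pel_dist(1)[OF dp] lp by auto

lemma rest_props:
  "set (restL n m ps) = {1..n+m} - set (pel ps)" "distinct (restL n m ps)" "length (restL n m ps) = n - m"
proof -
  show "set (restL n m ps) = {1..n+m} - set (pel ps)" "distinct (restL n m ps)" by (auto simp: restL_def)
  have "card (set (pel ps)) = 2 * m" using dp lp by (simp add: distinct_card length_pel)
  then have "card ({1..n+m} - set (pel ps)) = n - m" using sp by (simp add: card_Diff_subset finite_subset)
  then show "length (restL n m ps) = n - m" by (simp add: restL_def)
qed

lemma uw_union: "uu ps S ` {..<m} \<union> ww ps S ` {..<m} = set (pel ps)"
proof (intro equalityI subsetI)
  fix x assume "x \<in> uu ps S ` {..<m} \<union> ww ps S ` {..<m}"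
  then show "x \<in> set (pel ps)" using uw_mem by auto
next
  fix x assume "x \<in> set (pel ps)"
  then obtain i where i: "i < m" "x = fst (ps!i) \<or> x = snd (ps!i)"
    using lp unfolding set_pel by (auto simp: in_set_conv_nth)
  then have "x = uu ps S i \<or> x = ww ps S i" by (auto simp: uu_def ww_def)
  then show "x \<in> uu ps S ` {..<m} \<union> ww ps S ` {..<m}" using i by auto
qed

lemma TS_tabs: "TS n m ps S \<in> tabs [n,m]"
proof -
  let ?A = "map (uu ps S) [0..<m]" and ?W = "map (ww ps S) [0..<m]" and ?R = "restL n m ps"
  have d1: "distinct ?A"
    unfolding distinct_map by (auto simp: inj_on_def intro: uw_dist(2))
  have d2: "distinct ?W"
    unfolding distinct_map by (auto simp: inj_on_def intro: uw_dist(3))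
  have sA: "set ?A \<subseteq> set (pel ps)" "set ?W \<subseteq> set (pel ps)" using uw_mem by auto
  have disj1: "set ?A \<inter> set ?R = {}" using sA(1) rest_props(1) by blast
  have disjAW: "set ?A \<inter> set ?W = {}"
  proof -
    have "x \<notin> set ?W" if x: "x \<in> set ?A" for x
    proof
      assume "x \<in> set ?W"
      then obtain i j where "i < m" "j < m" "x = uu ps S i" "x = ww ps S j" using x by auto
      then show False using uw_dist(1) by metis
    qed
    then show ?thesis by blast
  qed
  have disjRW: "set ?R \<inter> set ?W = {}" using sA(2) rest_props(1) by blast
  have dist: "distinct ((?A @ ?R) @ ?W)"
  proof -
    have "set ?A \<inter> (set ?R \<union> set ?W) = {}" using disj1 disjAW by blast
    then show ?thesis using d1 d2 disjRW rest_props(2) by simp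
  qed
  have "set ?A \<union> set ?W = set (pel ps)"
    using uw_union[of S] by (simp add: atLeast0LessThan)
  then have un: "set (?A @ ?R) \<union> set ?W = {1..n + m}"
    using rest_props(1) sp by auto
  have l1: "length (?A @ ?R) = n" using rest_props(3) mn by simp
  have l2: "length ?W = m" by simp
  show ?thesis unfolding TS_def lp by (rule tabs2I[OF l1 l2 dist un])
qed

lemma TS_nth:
  "i < m \<Longrightarrow> TS n m ps S ! 0 ! i = uu ps S i"
  "i < m \<Longrightarrow> TS n m ps S ! 1 ! i = ww ps S i"
  "m \<le> i \<Longrightarrow> i < n \<Longrightarrow> TS n m ps S ! 0 ! i = restL n m ps ! (i - m)"
  using lp by (auto simp: TS_def nth_append)

lemma TS_len: "length (TS n m ps S ! 0) = n" "length (TS n m ps S ! 1) = m"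
  using tab2(2,3)[OF TS_tabs] by auto

lemma row_fst: "i < m \<Longrightarrow> rowof (TS n m ps S) (fst (ps!i)) = i"
  and row_snd: "i < m \<Longrightarrow> rowof (TS n m ps S) (snd (ps!i)) = i"
proof -
  assume i: "i < m"
  have r0: "rowof (TS n m ps S) (uu ps S i) = i"
    using rowof_nth[OF TS_tabs, of 0 i] TS_nth(1)[OF i] TS_len mn i by simp
  have r1: "rowof (TS n m ps S) (ww ps S i) = i"
    using rowof_nth[OF TS_tabs, of 1 i] TS_nth(2)[OF i] TS_len i by simp
  show "rowof (TS n m ps S) (fst (ps!i)) = i" "rowof (TS n m ps S) (snd (ps!i)) = i"
    using r0 r1 by (auto simp: uu_def ww_def split: if_splits)
qed

lemma row_rest: "j < n - m \<Longrightarrow> rowof (TS n m ps S) (restL n m ps ! j) = m + j"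
proof -
  assume j: "j < n - m"
  have mj: "m + j < n" using j by simp
  have "TS n m ps S ! 0 ! (m + j) = restL n m ps ! j" using TS_nth(3)[of "m+j"] mj by simp
  moreover have "rowof (TS n m ps S) (TS n m ps S ! 0 ! (m + j)) = m + j"
    using rowof_nth[OF TS_tabs, of 0 "m+j"] TS_len mj by simp
  ultimately show ?thesis by simp
qed

lemma rowof_TS: "rowof (TS n m ps S) = rowof (TS n m ps {})"
proof
  fix x
  show "rowof (TS n m ps S) x = rowof (TS n m ps {}) x"
  proof (cases "x \<in> set (pel ps)")
    case True
    then obtain i where i: "i < m" "x = fst (ps!i) \<or> x = snd (ps!i)"
      using lp unfolding set_pel by (auto simp: in_set_conv_nth)
    then show ?thesis using row_fst row_snd by auto
  next
    case False
    show ?thesis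
    proof (cases "x \<in> {1..n+m}")
      case True
      then have "x \<in> set (restL n m ps)" using False rest_props(1) by auto
      then obtain j where "j < n - m" "x = restL n m ps ! j" using rest_props(3) by (auto simp: in_set_conv_nth)
      then show ?thesis using row_rest by simp
    next
      case nx: False
      have "x \<notin> set (concat (TS n m ps S))" "x \<notin> set (concat (TS n m ps {}))"
        using tabsD(3)[OF TS_tabs] nx by auto
      then show ?thesis by (simp add: rowof_def)
    qed
  qed
qed

lemma TS_insert:
  assumes i: "i < m" "i \<notin> S"
  shows "TS n m ps (insert i S) = tab_act (transpose (fst (ps!i)) (snd (ps!i))) (TS n m ps S)"
proof -
  let ?t = "transpose (fst (ps!i)) (snd (ps!i))"
  have u: "?t (uu ps S k) = uu ps (insert i S) k" if k: "k < m" for k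
  proof (cases "k = i")
    case True then show ?thesis using i by (simp add: uu_def)
  next
    case False
    have k': "k < length ps" and i': "i < length ps" using k i lp by auto
    have "fst (ps!i) \<noteq> snd (ps!k)" "fst (ps!k) \<noteq> snd (ps!i)"
      "fst (ps!k) \<noteq> fst (ps!i)" "snd (ps!k) \<noteq> snd (ps!i)"
      using pel_dist[OF dp k' i'] pel_dist[OF dp i' k'] False by auto
    then have "uu ps S k \<noteq> fst (ps!i)" "uu ps S k \<noteq> snd (ps!i)"
      by (auto simp: uu_def)
    then show ?thesis using False by (simp add: uu_def)
  qed
  have w: "?t (ww ps S k) = ww ps (insert i S) k" if k: "k < m" for k
  proof (cases "k = i")
    case True then show ?thesis using i by (simp add: ww_def)
  next
    case False
    have k': "k < length ps" and i': "i < length ps" using k i lp by auto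
    have "fst (ps!i) \<noteq> snd (ps!k)" "fst (ps!k) \<noteq> snd (ps!i)"
      "fst (ps!k) \<noteq> fst (ps!i)" "snd (ps!k) \<noteq> snd (ps!i)"
      using pel_dist[OF dp k' i'] pel_dist[OF dp i' k'] False by auto
    then have "ww ps S k \<noteq> fst (ps!i)" "ww ps S k \<noteq> snd (ps!i)"
      by (auto simp: ww_def)
    then show ?thesis using False by (simp add: ww_def)
  qed
  have r: "?t x = x" if "x \<in> set (restL n m ps)" for x
  proof -
    have "x \<noteq> fst (ps!i)" "x \<noteq> snd (ps!i)" using that rest_props(1) fs_mem i by auto
    then show ?thesis by simp
  qed
  have "map ?t (map (uu ps S) [0..<m]) = map (uu ps (insert i S)) [0..<m]" using u by simp
  moreover have "map ?t (map (ww ps S) [0..<m]) = map (ww ps (insert i S)) [0..<m]" using w by simp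
  moreover have "map ?t (restL n m ps) = restL n m ps" using r by (simp add: map_idI)
  ultimately show ?thesis using lp by (simp add: TS_def tab_act_def)
qed

lemma sgn_TS:
  assumes "finite S" "S \<subseteq> {..<m}"
  shows "sgnT (n+m) (TS n m ps S) = (-1)^card S * sgnT (n+m) (TS n m ps {})"
  using assms
proof (induction S rule: finite_induct)
  case empty then show ?case by simp
next
  case (insert i S)
  have i: "i < m" using insert by auto
  have p: "transpose (fst (ps!i)) (snd (ps!i)) permutes {1..n+m}"
    using permutes_swap_id fs_mem[OF i] sp by (metis subsetD)
  have "sgnT (n+m) (TS n m ps (insert i S)) = sign (transpose (fst (ps!i)) (snd (ps!i))) * sgnT (n+m) (TS n m ps S)"
    unfolding TS_insert[OF i insert(2)] by (rule sgnT_tab_act[OF p TS_tabs]) simp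
  also have "\<dots> = - sgnT (n+m) (TS n m ps S)" using fs_ne[OF i] by (simp add: sign_swap_id)
  finally show ?case using insert by simp
qed

lemma rowof_pos:
  assumes T: "T \<in> tabs [n,m]" and x: "x \<in> {1..n+m}" and r: "rowof T x = i"
  shows "\<exists>c<2. i < length (T!c) \<and> T!c!i = x"
proof -
  obtain c k where ck: "c < 2" "k < length (T!c)" "T!c!k = x" using tab_mem_pos[OF T x] by blast
  then have "k = i" using rowof_nth[OF T ck(1,2)] r by simp
  then show ?thesis using ck by blast
qed

lemma TS_onto:
  assumes T: "T \<in> tabs [n,m]" and r: "rowof T = rowof (TS n m ps {})"
  shows "T = TS n m ps {i. i < m \<and> T!0!i = fst (ps!i)}"
proof -
  let ?S = "{i. i < m \<and> T!0!i = fst (ps!i)}"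
  let ?T0 = "TS n m ps {}"
  note t = tab2[OF T]
  have N: "T!c!i \<in> {1..n+m}" if "c < 2" "i < length (T!c)" for c i
    using that t(7) by (cases c) auto
  have rT: "rowof T (T!c!i) = i" if "c < 2" "i < length (T!c)" for c i using rowof_nth[OF T that] .
  have pos0: "\<exists>c<2. i < length (?T0!c) \<and> ?T0!c!i = T!c'!i" if "c' < 2" "i < length (T!c')" for c' i
    using rowof_pos[OF TS_tabs N[OF that]] rT[OF that] r by metis
  have c0: "T!0!i = uu ps ?S i" "T!1!i = ww ps ?S i" if i: "i < m" for i
  proof -
    have l0: "i < length (T!0)" "i < length (T!1)" using i t(2,3) mn by auto
    have e0: "?T0!0!i = snd (ps!i)" "?T0!1!i = fst (ps!i)" using TS_nth(1,2)[OF i] by (auto simp: uu_def ww_def)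
    obtain c where c: "c < 2" "?T0!c!i = T!0!i" using pos0[of 0 i] l0 by auto
    obtain c' where c': "c' < 2" "?T0!c'!i = T!1!i" using pos0[of 1 i] l0 by auto
    have x01: "T!0!i \<in> {fst (ps!i), snd (ps!i)}" using c e0 by (cases c) auto
    have y01: "T!1!i \<in> {fst (ps!i), snd (ps!i)}" using c' e0 by (cases c') auto
    have ne: "T!0!i \<noteq> T!1!i" using t(6) l0 by (metis disjoint_iff nth_mem)
    show "T!0!i = uu ps ?S i" "T!1!i = ww ps ?S i"
      using x01 y01 ne fs_ne[OF i] i by (auto simp: uu_def ww_def)
  qed
  have c1: "T!0!i = restL n m ps ! (i - m)" if i: "m \<le> i" "i < n" for i
  proof -
    have l0: "i < length (T!0)" using i t(2) by auto
    obtain c where c: "c < 2" "i < length (?T0!c)" "?T0!c!i = T!0!i" using pos0[of 0 i] l0 by auto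
    have "c = 0" using c TS_len i by (cases c) auto
    then show ?thesis using c TS_nth(3)[OF i] by simp
  qed
  have "T!0 = TS n m ps ?S ! 0"
  proof (rule nth_equalityI)
    show "length (T!0) = length (TS n m ps ?S ! 0)" using t(2) TS_len by simp
    fix i assume i: "i < length (T!0)"
    show "T!0!i = TS n m ps ?S ! 0 ! i"
    proof (cases "i < m")
      case True then show ?thesis using c0(1) TS_nth(1) by simp
    next
      case False
      then have "m \<le> i" "i < n" using i t(2) by auto
      then show ?thesis using c1 TS_nth(3) by simp
    qed
  qed
  moreover have "T!1 = TS n m ps ?S ! 1"
    by (rule nth_equalityI) (use t(3) TS_len c0 TS_nth in auto)
  ultimately have e: "[T!0, T!1] = [TS n m ps ?S ! 0, TS n m ps ?S ! 1]" by simp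
  have e2: "TS n m ps ?S = [TS n m ps ?S ! 0, TS n m ps ?S ! 1]" by (rule tab2(1)[OF TS_tabs])
  show ?thesis by (subst t(1), subst e2, rule e)
qed

lemma TS_inj: "inj_on (TS n m ps) (Pow {..<m})"
proof (rule inj_onI)
  fix S S' assume S: "S \<in> Pow {..<m}" and S': "S' \<in> Pow {..<m}" and e: "TS n m ps S = TS n m ps S'"
  have "i \<in> S \<longleftrightarrow> i \<in> S'" if i: "i < m" for i
  proof -
    have "uu ps S i = uu ps S' i" using TS_nth(1)[OF i, of S] TS_nth(1)[OF i, of S'] e by simp
    then show ?thesis using fs_ne[OF i] by (auto simp: uu_def split: if_splits)
  qed
  then show "S = S'" using S S' by auto
qed

lemma TS_col1: "set (TS n m ps S ! 1) = chs ps S"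
  using lp by (auto simp: TS_def chs_def ww_def atLeast0LessThan)

lemma alpha_alt:
  "alpha [n,m] f (rowof (TS n m ps {})) = of_int (sgnT (n+m) (TS n m ps {})) * altS (redf n m f) ps"
proof -
  let ?r = "rowof (TS n m ps {})"
  let ?R = "{T'\<in>tabs [n,m]. rowof T' = ?r}"
  let ?v = "redf n m f"
  have "alpha [n,m] f ?r = (\<Sum>B\<in>Bm n m. ?v B * Qf n m ?r B)" by (rule alpha_Q)
  also have "\<dots> = (\<Sum>B\<in>Bm n m. \<Sum>T'\<in>{T'\<in>?R. set (T'!1) = B}. of_int (sgnT (n+m) T') * ?v (set (T'!1)))"
    unfolding Qf_def sum_distrib_left by (intro sum.cong refl) (auto simp: mult.commute)
  also have "\<dots> = (\<Sum>T'\<in>?R. of_int (sgnT (n+m) T') * ?v (set (T'!1)))"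
    by (rule sum.group) (use tab_Bm in \<open>auto simp: finite_Bm tabs_finite\<close>)
  also have "\<dots> = (\<Sum>S\<in>Pow {..<m}. of_int (sgnT (n+m) (TS n m ps S)) * ?v (set (TS n m ps S ! 1)))"
  proof (rule sum.reindex_bij_betw[where h="TS n m ps" and g="\<lambda>T'. of_int (sgnT (n+m) T') * ?v (set (T'!1))", symmetric])
    show "bij_betw (TS n m ps) (Pow {..<m}) ?R"
    proof (rule bij_betw_imageI[OF TS_inj])
      show "TS n m ps ` Pow {..<m} = ?R"
      proof (intro equalityI subsetI)
        fix T' assume "T' \<in> TS n m ps ` Pow {..<m}"
        then obtain S where S: "T' = TS n m ps S" by blast
        show "T' \<in> ?R" unfolding S by (intro CollectI conjI TS_tabs rowof_TS)
      next
        fix T' assume T': "T' \<in> ?R"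
        then have "T' = TS n m ps {i. i < m \<and> T'!0!i = fst (ps!i)}" by (intro TS_onto) auto
        moreover have "{i. i < m \<and> T'!0!i = fst (ps!i)} \<in> Pow {..<m}" by auto
        ultimately show "T' \<in> TS n m ps ` Pow {..<m}" by (rule image_eqI)
      qed
    qed
  qed
  also have "\<dots> = (\<Sum>S\<in>Pow {..<m}. of_int (sgnT (n+m) (TS n m ps {})) * ((-1)^card S * ?v (chs ps S)))"
  proof (rule sum.cong[OF refl])
    fix S assume S: "S \<in> Pow {..<m}"
    then have fS: "finite S" "S \<subseteq> {..<m}" using finite_subset by auto
    have e1: "sgnT (n+m) (TS n m ps S) = (-1)^card S * sgnT (n+m) (TS n m ps {})" by (rule sgn_TS[OF fS])
    have e2: "set (TS n m ps S ! 1) = chs ps S" by (rule TS_col1)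
    show "of_int (sgnT (n+m) (TS n m ps S)) * ?v (set (TS n m ps S ! 1)) =
      of_int (sgnT (n+m) (TS n m ps {})) * ((-1)^card S * ?v (chs ps S))"
      unfolding e1 e2 by (simp add: mult.assoc mult.left_commute)
  qed
  also have "\<dots> = of_int (sgnT (n+m) (TS n m ps {})) * altS ?v ps"
    unfolding altS_def lp by (simp add: sum_distrib_left)
  finally show ?thesis .
qed

end


lemma Rel_Fsp: "h \<in> Rel [n,m] \<Longrightarrow> h \<in> Fsp [n,m]"
proof -
  assume h: "h \<in> Rel [n,m]"
  let ?G = "{(\<lambda>S. delta T S - of_int (sign b) * delta (tab_act b T) S) | T b.
                      T \<in> tabs [n,m] \<and> b \<in> colstab T}"
  obtain F c where F: "finite F" "F \<subseteq> ?G" "h = (\<lambda>s. \<Sum>a\<in>F. c a * a s)"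
    using h unfolding Rel_def by (rule cspan_elim)
  have "a S = 0" if "a \<in> F" "S \<notin> tabs [n,m]" for a S
  proof -
    have "a \<in> ?G" using that(1) F(2) by blast
    then obtain T b where Tb: "T \<in> tabs [n,m]" "b \<in> colstab T"
      "a = (\<lambda>S. delta T S - of_int (sign b) * delta (tab_act b T) S)" by blast
    have "tab_act b T \<in> tabs [n,m]" using tab_act_tabs[of b "[n,m]" T] colstab_permutes[OF Tb(2,1)] Tb(1) by simp
    then show ?thesis using Tb that by (auto simp: delta_def)
  qed
  then show ?thesis unfolding Fsp_def F(3) by (auto intro!: sum.neutral)
qed

lemma eta_Fsp: "eta n m g \<in> Fsp [n,m]"
  unfolding Fsp_def
proof (intro CollectI allI impI)
  fix S assume S: "S \<notin> tabs [n,m]"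
  have "of_nat m * delta T S - (\<Sum>j\<in>{1..m}. piop 1 j T S) = 0" if T: "T \<in> tabs [n,m]" for T
  proof -
    have "piop 1 j T S = 0" if j: "j \<in> {1..m}" for j
    proof -
      have y: "T!1!(j-1) \<in> set (T!1)" using j tab2(3)[OF T] by auto
      have "delta (tab_act (transpose x (T!1!(j-1))) T) S = 0" if x: "x \<in> set (T!0)" for x
        using swap_tab(1)[OF T x y] S by (auto simp: delta_def)
      then show ?thesis unfolding piop_def by simp
    qed
    moreover have "delta T S = 0" using T S by (auto simp: delta_def)
    ultimately show ?thesis by simp
  qed
  then show "eta n m g S = 0" unfolding eta_def by simp
qed

lemma alpha_add: "alpha cols (\<lambda>S. f S + g S) = (\<lambda>r. alpha cols f r + alpha cols g r)"
  unfolding alpha_def by (simp add: distrib_right sum.distrib)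

lemma alpha_scale: "alpha cols (\<lambda>S. c * f S) = (\<lambda>r. c * alpha cols f r)"
  unfolding alpha_def by (simp add: sum_distrib_left mult.assoc)

lemma alpha_diff: "alpha cols (\<lambda>S. f S - g S) = (\<lambda>r. alpha cols f r - alpha cols g r)"
  unfolding alpha_def by (simp add: left_diff_distrib sum_subtractf)

lemma alpha_lin:
  "finite I \<Longrightarrow> alpha cols (\<lambda>S. \<Sum>i\<in>I. c i * g i S) r = (\<Sum>i\<in>I. c i * alpha cols (g i) r)"
  unfolding alpha_def sum_distrib_right sum_distrib_left
  by (subst sum.swap) (simp add: mult.assoc)

lemma alpha_delta: "T \<in> tabs cols \<Longrightarrow> alpha cols (delta T) = polytab T"
proof
  fix r assume T: "T \<in> tabs cols"
  have "alpha cols (delta T) r = (\<Sum>T'\<in>tabs cols. if T' = T then polytab T' r else 0)"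
    unfolding alpha_def delta_def by (rule sum.cong) auto
  also have "\<dots> = polytab T r" using T by (simp add: tabs_finite)
  finally show "alpha cols (delta T) r = polytab T r" .
qed

lemma alpha_red:
  assumes "\<And>B. redf n m f B = redf n m g B"
  shows "alpha [n,m] f = alpha [n,m] g"
  using assms by (simp add: alpha_Q[abs_def])

lemma alpha_Rel: "h \<in> Rel [n,m] \<Longrightarrow> alpha [n,m] h = (\<lambda>r. 0)"
  by (simp add: alpha_Q[abs_def] Rel_red0)

definition canT :: "nat \<Rightarrow> nat \<Rightarrow> nat set \<Rightarrow> nat list list" where
  "canT n m B = [sorted_list_of_set ({1..n+m} - B), sorted_list_of_set B]"

lemma canT:
  assumes B: "B \<in> Bm n m"
  shows "canT n m B \<in> tabs [n,m]" "set (canT n m B ! 1) = B"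
proof -
  have BN: "B \<subseteq> {1..n+m}" "card B = m" using B by (auto simp: Bm_def)
  have fB: "finite B" using BN finite_subset by auto
  show "set (canT n m B ! 1) = B" using fB by (simp add: canT_def)
  have "card ({1..n+m} - B) = n" using BN fB by (simp add: card_Diff_subset)
  then show "canT n m B \<in> tabs [n,m]" unfolding canT_def
    by (intro tabs2I) (use fB BN in auto)
qed

definition lift :: "nat \<Rightarrow> nat \<Rightarrow> (nat set \<Rightarrow> complex) \<Rightarrow> nat list list \<Rightarrow> complex" where
  "lift n m g = (\<lambda>S. \<Sum>B\<in>Bm n m. (g B * of_int (sgnT (n+m) (canT n m B))) * delta (canT n m B) S)"

lemma lift_Fsp: "lift n m g \<in> Fsp [n,m]"
  unfolding Fsp_def lift_def using canT(1) by (auto simp: delta_def intro!: sum.neutral)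

lemma redf_lift: "B0 \<in> Bm n m \<Longrightarrow> redf n m (lift n m g) B0 = g B0"
proof -
  assume B0: "B0 \<in> Bm n m"
  have "redf n m (lift n m g) B0 = (\<Sum>B\<in>Bm n m. (g B * of_int (sgnT (n+m) (canT n m B))) * redf n m (delta (canT n m B)) B0)"
    unfolding lift_def by (rule redf_lin[OF finite_Bm])
  also have "\<dots> = (\<Sum>B\<in>Bm n m. if B = B0 then g B else 0)"
  proof (rule sum.cong[OF refl])
    fix B assume B: "B \<in> Bm n m"
    have "of_int (sgnT (n+m) (canT n m B)) * of_int (sgnT (n+m) (canT n m B)) = (1::complex)"
      by (simp flip: of_int_mult)
    then show "(g B * of_int (sgnT (n+m) (canT n m B))) * redf n m (delta (canT n m B)) B0 = (if B = B0 then g B else 0)"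
      unfolding redf_delta using canT[OF B] by (auto simp: mult.assoc)
  qed
  also have "\<dots> = g B0" using B0 by (simp add: finite_Bm)
  finally show ?thesis .
qed

lemma Hop_cong: "(\<And>B. B \<in> Bm n m \<Longrightarrow> v B = w B) \<Longrightarrow> Hop n m v = Hop n m w"
  unfolding Hop_def Dt_def Dop_def by (intro ext) (auto intro!: sum.cong)

lemma Hop_diff: "Hop n m (\<lambda>B. v B - w B) = (\<lambda>B. Hop n m v B - Hop n m w B)"
  unfolding Hop_def Dt_def Dop_def by (intro ext) (simp add: sum_subtractf)

lemma Hop_add: "Hop n m (v + w) = Hop n m v + Hop n m w"
  unfolding Hop_def Dt_def Dop_def by (intro ext) (simp add: sum.distrib plus_fun_def)

lemma Hop_scf: "Hop n m (scf c v) = scf c (Hop n m v)"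
  unfolding Hop_def Dt_def Dop_def scf_def by (intro ext) (simp add: sum_distrib_left)

lemma Hop_decomp: "\<exists>g. Hop n m v = Hop n m (Hop n m g)"
proof (rule decomp_abstract[where Bs="Bm n m"])
  show "finite (Bm n m)" by (rule finite_Bm)
  show "\<And>x y. Hop n m (x + y) = Hop n m x + Hop n m y" by (rule Hop_add)
  show "\<And>c x. Hop n m (scf c x) = scf c (Hop n m x)" by (rule Hop_scf)
  show "\<And>v x. x \<notin> Bm n m \<Longrightarrow> Hop n m v x = 0" by (simp add: Hop_def Dt_def)
  show "Hop n m w = 0" if "Hop n m (Hop n m w) = 0" for w
  proof -
    have "Hop n m (Hop n m w) = (\<lambda>_. 0)" using that by (simp add: zero_fun_def)
    then have "Hop n m w = (\<lambda>_. 0)" by (rule Hop_ki)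
    then show ?thesis by (simp add: zero_fun_def)
  qed
qed

lemma redf_eta_Hop: "redf n m (eta n m f) = Hop n m (redf n m f)"
  by (rule ext) (simp add: redf_eta Hop_def)

lemma redf_minus: "redf n m (\<lambda>S. f S - g S) B = redf n m f B - redf n m g B"
  using redf_diff[of n m f 1 g B] by simp

lemma main_decomp:
  assumes f: "f \<in> Fsp [n,m]"
  shows "\<exists>g\<in>Fsp [n,m]. eta n m (\<lambda>S. f S - eta n m g S) \<in> Rel [n,m]"
proof -
  obtain g' where g': "Hop n m (redf n m f) = Hop n m (Hop n m g')" using Hop_decomp by blast
  define g where "g = lift n m g'"
  have gF: "g \<in> Fsp [n,m]" by (simp add: g_def lift_Fsp)
  have Hg: "Hop n m (redf n m g) = Hop n m g'"
    by (rule Hop_cong) (simp add: g_def redf_lift)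
  let ?k = "\<lambda>S. f S - eta n m g S"
  have kF: "?k \<in> Fsp [n,m]" using f eta_Fsp[of n m g] by (simp add: Fsp_def)
  have "redf n m (eta n m ?k) = Hop n m (\<lambda>B. redf n m f B - redf n m (eta n m g) B)"
    unfolding redf_eta_Hop redf_minus ..
  also have "\<dots> = (\<lambda>B. Hop n m (redf n m f) B - Hop n m (Hop n m (redf n m g)) B)"
    unfolding Hop_diff redf_eta_Hop ..
  also have "\<dots> = (\<lambda>B. 0)" unfolding g' Hg by simp
  finally have "redf n m (eta n m ?k) = (\<lambda>B. 0)" .
  then have "eta n m ?k \<in> Rel [n,m]"
    by (intro red0_Rel eta_Fsp) (simp add: fun_eq_iff)
  then show ?thesis using gF by blast
qed


lemma kernel_part:
  assumes mn: "m \<le> n" and f: "f \<in> Fsp [n,m]" and e: "eta n m f \<in> Rel [n,m]"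
    and a: "alpha [n,m] f = (\<lambda>r. 0)"
  shows "f \<in> Rel [n,m]"
proof -
  let ?v = "redf n m f"
  have H0: "Hop n m ?v = (\<lambda>_. 0)"
    using Rel_red0[OF e] by (simp add: redf_eta_Hop[symmetric] fun_eq_iff)
  have "?v B = 0" if B: "B \<in> Bm n m" for B
  proof (rule harm_alt_zero[where X="{1..n+m}" and k=m])
    show "finite {1..n+m}" by simp
    show "\<forall>C. C \<subseteq> {1..n+m} \<longrightarrow> card C + 1 = m \<longrightarrow> (\<Sum>x\<in>{1..n+m} - C. ?v (insert x C)) = 0"
      using Hop_zero_harm[OF H0] by blast
    show "\<forall>ps. length ps = m \<longrightarrow> distinct (pel ps) \<longrightarrow> set (pel ps) \<subseteq> {1..n+m} \<longrightarrow> altS ?v ps = 0"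
    proof (intro allI impI)
      fix ps :: "(nat \<times> nat) list"
      assume l: "length ps = m" and d: "distinct (pel ps)" and s: "set (pel ps) \<subseteq> {1..n+m}"
      have "of_int (sgnT (n+m) (TS n m ps {})) * altS ?v ps = 0"
        using alpha_alt[OF l d s mn, of f] a by simp
      moreover have "(of_int (sgnT (n+m) (TS n m ps {})) :: complex) \<noteq> 0" by (simp add: sgnT_def)
      ultimately show "altS ?v ps = 0" by simp
    qed
    show "B \<subseteq> {1..n+m}" "card B = m" using B by (auto simp: Bm_def)
  qed
  then have "\<And>B. ?v B = 0" using redf_notBm by metis
  then show ?thesis by (rule red0_Rel[OF f])
qed

lemma rowof_act_comp:
  assumes W: "W \<in> tabs [n,m]" and s: "s permutes {1..n+m}"
  shows "rowof (tab_act s W) = rowof W \<circ> inv s"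
proof
  fix x
  have "rowof (tab_act s W) x = rowof (tab_act s W) (s (inv s x))"
    using permutes_inverses(1)[OF s] by simp
  also have "\<dots> = rowof W (inv s x)" by (rule rowof_tab_act[OF W s])
  finally show "rowof (tab_act s W) x = (rowof W \<circ> inv s) x" by simp
qed

lemma Q_act:
  assumes s: "s permutes {1..n+m}"
  shows "Qf n m r (s ` B) = of_int (sign s) * Qf n m (r \<circ> s) B"
proof -
  let ?A = "{W\<in>tabs [n,m]. rowof W = r \<circ> s \<and> set (W!1) = B}"
  let ?A' = "{T'\<in>tabs [n,m]. rowof T' = r \<and> set (T'!1) = s ` B}"
  have si: "s \<circ> inv s = id" "inv s \<circ> s = id" using permutes_inv_o[OF s] by auto
  have pinv: "inv s permutes {1..n+m}" by (rule permutes_inv[OF s])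
  have injs: "inj s" using permutes_inj[OF s] .
  have key: "tab_act s W \<in> ?A'" if W: "W \<in> ?A" for W
  proof -
    have W1: "W \<in> tabs [n,m]" using W by simp
    have "rowof (tab_act s W) = rowof W \<circ> inv s" by (rule rowof_act_comp[OF W1 s])
    also have "\<dots> = r \<circ> (s \<circ> inv s)" using W by (simp add: comp_assoc)
    finally have r1: "rowof (tab_act s W) = r" using si by simp
    have "set (tab_act s W ! 1) = s ` set (W!1)" using tab2(11)[OF W1] by (simp add: nth_tab_act)
    then show ?thesis using r1 W tab_act_tabs[of s "[n,m]" W] s by simp
  qed
  have key2: "tab_act (inv s) T' \<in> ?A" if T': "T' \<in> ?A'" for T'
  proof -
    have T1: "T' \<in> tabs [n,m]" using T' by simp
    have "rowof (tab_act (inv s) T') = rowof T' \<circ> inv (inv s)" by (rule rowof_act_comp[OF T1 pinv])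
    also have "\<dots> = r \<circ> s" using T' inv_inv_eq[OF permutes_bij[OF s]] by simp
    finally have r1: "rowof (tab_act (inv s) T') = r \<circ> s" .
    have "set (tab_act (inv s) T' ! 1) = inv s ` set (T'!1)" using tab2(11)[OF T1] by (simp add: nth_tab_act)
    also have "\<dots> = inv s ` s ` B" using T' by simp
    also have "\<dots> = B" by (simp add: image_comp si)
    finally show ?thesis using r1 tab_act_tabs[of "inv s" "[n,m]" T'] pinv T1 by simp
  qed
  have bij: "bij_betw (tab_act s) ?A ?A'"
    by (rule bij_betw_byWitness[where f'="tab_act (inv s)"])
       (use key key2 si in \<open>auto simp: tab_act_comp tab_act_id\<close>)
  have "Qf n m r (s ` B) = (\<Sum>W\<in>?A. of_int (sgnT (n+m) (tab_act s W)))"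
    unfolding Qf_def by (rule sum.reindex_bij_betw[OF bij, symmetric])
  also have "\<dots> = (\<Sum>W\<in>?A. of_int (sign s) * of_int (sgnT (n+m) W))"
  proof (rule sum.cong[OF refl])
    fix W assume "W \<in> ?A"
    then have W: "W \<in> tabs [n,m]" by simp
    show "(of_int (sgnT (n+m) (tab_act s W)) :: complex) = of_int (sign s) * of_int (sgnT (n+m) W)"
      using sgnT_tab_act[OF s W] by simp
  qed
  also have "\<dots> = of_int (sign s) * Qf n m (r \<circ> s) B"
    unfolding Qf_def by (simp add: sum_distrib_left)
  finally show ?thesis .
qed

lemma polytab_act:
  assumes s: "s permutes {1..n+m}" and T: "T \<in> tabs [n,m]"
  shows "polytab (tab_act s T) r = polytab T (r \<circ> s)"
proof -
  have sT: "tab_act s T \<in> tabs [n,m]" using tab_act_tabs[of s "[n,m]" T] s T by simp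
  have c1: "set (tab_act s T ! 1) = s ` set (T!1)" using tab2(11)[OF T] by (simp add: nth_tab_act)
  have "polytab (tab_act s T) r = of_int (sgnT (n+m) (tab_act s T)) * Qf n m r (s ` set (T!1))"
    using polytab_Q[OF sT] c1 by simp
  also have "\<dots> = of_int (sign s * sgnT (n+m) T) * (of_int (sign s) * Qf n m (r \<circ> s) (set (T!1)))"
    using sgnT_tab_act[OF s T] Q_act[OF s] by simp
  also have "\<dots> = of_int (sign s * sign s) * (of_int (sgnT (n+m) T) * Qf n m (r \<circ> s) (set (T!1)))"
    by (simp only: of_int_mult mult_ac)
  also have "\<dots> = polytab T (r \<circ> s)"
  proof -
    have "sign s * sign s = (1::int)" by simp
    then show ?thesis using polytab_Q[OF T] by (simp only: of_int_1 mult_1)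
  qed
  finally show ?thesis .
qed

lemma alpha_equiv:
  assumes s: "s permutes {1..n+m}"
  shows "alpha [n,m] (actF s f) = actM s (alpha [n,m] f)"
proof
  fix r
  have si: "inv s \<circ> s = id" "s \<circ> inv s = id" using permutes_inv_o[OF s] by auto
  have pinv: "inv s permutes {1..n+m}" by (rule permutes_inv[OF s])
  have bij: "bij_betw (tab_act s) (tabs [n,m]) (tabs [n,m])"
    by (rule bij_betw_byWitness[where f'="tab_act (inv s)"])
       (use si tab_act_tabs[of s "[n,m]"] tab_act_tabs[of "inv s" "[n,m]"] s pinv
         in \<open>auto simp: tab_act_comp tab_act_id\<close>)
  have "alpha [n,m] (actF s f) r = (\<Sum>T\<in>tabs [n,m]. f (tab_act (inv s) T) * polytab T r)"
    by (simp add: alpha_def actF_def)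
  also have "\<dots> = (\<Sum>U\<in>tabs [n,m]. f (tab_act (inv s) (tab_act s U)) * polytab (tab_act s U) r)"
    by (rule sum.reindex_bij_betw[OF bij, symmetric])
  also have "\<dots> = (\<Sum>U\<in>tabs [n,m]. f U * polytab U (r \<circ> s))"
    by (rule sum.cong[OF refl]) (simp add: tab_act_comp si tab_act_id polytab_act[OF s])
  also have "\<dots> = actM s (alpha [n,m] f) r" by (simp add: actM_def alpha_def)
  finally show "alpha [n,m] (actF s f) r = actM s (alpha [n,m] f) r" .
qed

lemma alpha_Specht: "alpha [n,m] f \<in> Specht [n,m]"
proof -
  have "alpha [n,m] f = (\<lambda>r. \<Sum>T\<in>tabs [n,m]. f T * polytab T r)" by (simp add: alpha_def[abs_def])
  also have "\<dots> \<in> Specht [n,m]"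
    unfolding Specht_def
    by (rule cspan_sum[OF tabs_finite], rule cspan_scale, rule cspan_base) blast
  finally show ?thesis .
qed

lemma Specht_alpha:
  assumes w: "w \<in> Specht [n,m]"
  shows "\<exists>f\<in>Fsp [n,m]. alpha [n,m] f = w"
proof -
  obtain F c where F: "finite F" "F \<subseteq> {polytab T | T. T \<in> tabs [n,m]}" "w = (\<lambda>s. \<Sum>a\<in>F. c a * a s)"
    using w unfolding Specht_def by (rule cspan_elim)
  define Ta where "Ta = (\<lambda>a. SOME T. T \<in> tabs [n,m] \<and> a = polytab T)"
  have Ta: "Ta a \<in> tabs [n,m]" "a = polytab (Ta a)" if "a \<in> F" for a
  proof -
    have "\<exists>T. T \<in> tabs [n,m] \<and> a = polytab T" using that F(2) by blast
    then show "Ta a \<in> tabs [n,m]" "a = polytab (Ta a)" unfolding Ta_def by (metis (mono_tags, lifting) someI_ex)+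
  qed
  define f where "f = (\<lambda>S. \<Sum>a\<in>F. c a * delta (Ta a) S)"
  have fF: "f \<in> Fsp [n,m]" unfolding Fsp_def f_def using Ta by (auto simp: delta_def intro!: sum.neutral)
  have "alpha [n,m] f = w"
  proof
    fix r
    have "alpha [n,m] f r = (\<Sum>a\<in>F. c a * alpha [n,m] (delta (Ta a)) r)"
      unfolding f_def by (rule alpha_lin[OF F(1)])
    also have "\<dots> = (\<Sum>a\<in>F. c a * a r)"
      by (rule sum.cong[OF refl]) (use Ta alpha_delta in auto)
    finally show "alpha [n,m] f r = w r" using F(3) by simp
  qed
  then show ?thesis using fF by blast
qed


theorem mainTheorem3:
  fixes n m :: nat
  assumes "1 \<le> m" and "m \<le> n"
  shows "(\<exists>\<phi> :: (nat list list \<Rightarrow> complex) \<Rightarrow> ((nat \<Rightarrow> nat) \<Rightarrow> complex).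
            (\<forall>f\<in>Fsp [n, m]. \<forall>g\<in>Fsp [n, m].
                \<phi> (\<lambda>S. f S + g S) = (\<lambda>r. \<phi> f r + \<phi> g r)) \<and>
            (\<forall>c. \<forall>f\<in>Fsp [n, m]. \<phi> (\<lambda>S. c * f S) = (\<lambda>r. c * \<phi> f r)) \<and>
            (\<forall>s. \<forall>f\<in>Fsp [n, m]. s permutes {1..n+m} \<longrightarrow> \<phi> (actF s f) = actM s (\<phi> f)) \<and>
            \<phi> ` {f \<in> Fsp [n, m]. eta n m f \<in> Rel [n, m]} = Specht [n, m] \<and>
            (\<forall>f\<in>Fsp [n, m]. eta n m f \<in> Rel [n, m] \<longrightarrow>
                (\<phi> f = (\<lambda>r. 0) \<longleftrightarrow> f \<in> Rel [n, m])))
       \<and> {f \<in> Fsp [n, m]. alpha [n, m] f = (\<lambda>r. 0)}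
           = {(\<lambda>S. eta n m g S + h S) | g h. g \<in> Fsp [n, m] \<and> h \<in> Rel [n, m]}"
proof -
  note mn = assms(2)
  have aeta: "alpha [n,m] (eta n m g) = (\<lambda>r. 0)" for g
    using alpha_eta[OF mn] by auto
  have dec: "\<exists>g\<in>Fsp [n,m]. (\<lambda>S. f S - eta n m g S) \<in> Fsp [n,m] \<and>
        eta n m (\<lambda>S. f S - eta n m g S) \<in> Rel [n,m] \<and>
        alpha [n,m] (\<lambda>S. f S - eta n m g S) = alpha [n,m] f" if f: "f \<in> Fsp [n,m]" for f
  proof -
    obtain g where g: "g \<in> Fsp [n,m]" "eta n m (\<lambda>S. f S - eta n m g S) \<in> Rel [n,m]"
      using main_decomp[OF f] by blast
    have "(\<lambda>S. f S - eta n m g S) \<in> Fsp [n,m]" using f eta_Fsp[of n m g] by (simp add: Fsp_def)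
    moreover have "alpha [n,m] (\<lambda>S. f S - eta n m g S) = alpha [n,m] f"
      by (simp add: alpha_diff aeta)
    ultimately show ?thesis using g by blast
  qed
  have P1: "\<forall>f\<in>Fsp [n, m]. \<forall>g\<in>Fsp [n, m].
                alpha [n,m] (\<lambda>S. f S + g S) = (\<lambda>r. alpha [n,m] f r + alpha [n,m] g r)"
    by (simp add: alpha_add)
  have P2: "\<forall>c. \<forall>f\<in>Fsp [n, m]. alpha [n,m] (\<lambda>S. c * f S) = (\<lambda>r. c * alpha [n,m] f r)"
    by (simp add: alpha_scale)
  have P3: "\<forall>s. \<forall>f\<in>Fsp [n, m]. s permutes {1..n+m} \<longrightarrow> alpha [n,m] (actF s f) = actM s (alpha [n,m] f)"
    by (simp add: alpha_equiv)
  have P4: "alpha [n,m] ` {f \<in> Fsp [n, m]. eta n m f \<in> Rel [n, m]} = Specht [n, m]"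
  proof (intro equalityI subsetI)
    fix w assume "w \<in> alpha [n,m] ` {f \<in> Fsp [n, m]. eta n m f \<in> Rel [n, m]}"
    then show "w \<in> Specht [n,m]" using alpha_Specht by auto
  next
    fix w assume "w \<in> Specht [n,m]"
    then obtain f where f: "f \<in> Fsp [n,m]" "alpha [n,m] f = w" using Specht_alpha by blast
    obtain g where g: "(\<lambda>S. f S - eta n m g S) \<in> Fsp [n,m]" "eta n m (\<lambda>S. f S - eta n m g S) \<in> Rel [n,m]"
        "alpha [n,m] (\<lambda>S. f S - eta n m g S) = alpha [n,m] f"
      using dec[OF f(1)] by blast
    then show "w \<in> alpha [n,m] ` {f \<in> Fsp [n, m]. eta n m f \<in> Rel [n, m]}"
      using f(2) by (metis (mono_tags, lifting) image_eqI mem_Collect_eq)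
  qed
  have P5: "\<forall>f\<in>Fsp [n, m]. eta n m f \<in> Rel [n, m] \<longrightarrow> (alpha [n,m] f = (\<lambda>r. 0) \<longleftrightarrow> f \<in> Rel [n, m])"
    using kernel_part[OF mn] alpha_Rel by blast
  have P6: "{f \<in> Fsp [n, m]. alpha [n, m] f = (\<lambda>r. 0)}
           = {(\<lambda>S. eta n m g S + h S) | g h. g \<in> Fsp [n, m] \<and> h \<in> Rel [n, m]}"
  proof (intro equalityI subsetI)
    fix f assume "f \<in> {f \<in> Fsp [n, m]. alpha [n, m] f = (\<lambda>r. 0)}"
    then have f: "f \<in> Fsp [n,m]" "alpha [n,m] f = (\<lambda>r. 0)" by auto
    obtain g where g: "g \<in> Fsp [n,m]" "(\<lambda>S. f S - eta n m g S) \<in> Fsp [n,m]" "eta n m (\<lambda>S. f S - eta n m g S) \<in> Rel [n,m]"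
        "alpha [n,m] (\<lambda>S. f S - eta n m g S) = alpha [n,m] f"
      using dec[OF f(1)] by blast
    have Rk: "(\<lambda>S. f S - eta n m g S) \<in> Rel [n,m]"
      using kernel_part[OF mn g(2,3)] g(4) f(2) by simp
    have e: "f = (\<lambda>S. eta n m g S + (f S - eta n m g S))" by simp
    show "f \<in> {(\<lambda>S. eta n m g S + h S) | g h. g \<in> Fsp [n, m] \<and> h \<in> Rel [n, m]}"
      unfolding mem_Collect_eq
      by (rule exI[of _ g], rule exI[of _ "\<lambda>S. f S - eta n m g S"], intro conjI e g(1) Rk)
  next
    fix f assume "f \<in> {(\<lambda>S. eta n m g S + h S) | g h. g \<in> Fsp [n, m] \<and> h \<in> Rel [n, m]}"
    then obtain g h where gh: "g \<in> Fsp [n,m]" "h \<in> Rel [n,m]" "f = (\<lambda>S. eta n m g S + h S)" by blast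
    have "f \<in> Fsp [n,m]" using gh eta_Fsp[of n m g] Rel_Fsp[OF gh(2)] by (simp add: Fsp_def)
    moreover have "alpha [n,m] f = (\<lambda>r. 0)"
      using gh(3) alpha_Rel[OF gh(2)] by (simp add: alpha_add aeta)
    ultimately show "f \<in> {f \<in> Fsp [n, m]. alpha [n, m] f = (\<lambda>r. 0)}" by simp
  qed
  show ?thesis using P1 P2 P3 P4 P5 P6 by blast
qed


end
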